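(* The variety of X-states $\mathscr X$ on $n$ qubits has dimension $2^{2n-1}+2n-1$.
   Context: Let $V_1,\dots,V_n$ be two-dimensional complex vector spaces and $\mathscr L$ the affine space of trace-one endomorphisms of $V_1\otimes\cdots\otimes V_n$. An X-state is a $\rho\in\mathscr L$ for which there exist ordered bases $\{e^i_0,e^i_1\}$ of the $V_i$ such that $\rho$ maps the span of the basis tensors $e^1_{\phi(1)}\otimes\cdots\otimes e^n_{\phi(n)}$ ($\phi:\{1,\dots,n\}\to\{0,1\}$) with $\sum\phi(i)$ even into itself and the span of those with $\sum\phi(i)$ odd into itself. $\mathscr X\subseteq\mathscr L$ is the Zariski closure of the set of X-states with its reduced induced structure (an irreducible variety). *)

theory Defs
  imports Complex_Main "HOL-Library.Extended_Nat"
begin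

definition aspace :: "'v set \<Rightarrow> ('v \<Rightarrow> complex) set" where
  "aspace V = {x. \<forall>v. v \<notin> V \<longrightarrow> x v = 0}"

inductive polyfun :: "'v set \<Rightarrow> (('v \<Rightarrow> complex) \<Rightarrow> complex) \<Rightarrow> bool" for V where
  pconst: "polyfun V (\<lambda>x. c)"
| pvar: "v \<in> V \<Longrightarrow> polyfun V (\<lambda>x. x v)"
| padd: "polyfun V f \<Longrightarrow> polyfun V g \<Longrightarrow> polyfun V (\<lambda>x. f x + g x)"
| pmult: "polyfun V f \<Longrightarrow> polyfun V g \<Longrightarrow> polyfun V (\<lambda>x. f x * g x)"

definition zariski_closed :: "'v set \<Rightarrow> ('v \<Rightarrow> complex) set \<Rightarrow> bool" where
  "zariski_closed V S \<longleftrightarrow>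
     (\<exists>F. (\<forall>f\<in>F. polyfun V f) \<and> S = {x \<in> aspace V. \<forall>f\<in>F. f x = 0})"

definition zariski_closure :: "'v set \<Rightarrow> ('v \<Rightarrow> complex) set \<Rightarrow> ('v \<Rightarrow> complex) set" where
  "zariski_closure V A = \<Inter>{S. zariski_closed V S \<and> A \<subseteq> S}"

definition zariski_irreducible :: "'v set \<Rightarrow> ('v \<Rightarrow> complex) set \<Rightarrow> bool" where
  "zariski_irreducible V Z \<longleftrightarrow> zariski_closed V Z \<and> Z \<noteq> {} \<and>
     (\<forall>S1 S2. zariski_closed V S1 \<and> zariski_closed V S2 \<and> Z = S1 \<union> S2 \<longrightarrow> Z = S1 \<or> Z = S2)"

definition zariski_dim :: "'v set \<Rightarrow> ('v \<Rightarrow> complex) set \<Rightarrow> enat" where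
  "zariski_dim V X = Sup {enat d | d. \<exists>Z :: nat \<Rightarrow> ('v \<Rightarrow> complex) set.
      (\<forall>i\<le>d. zariski_irreducible V (Z i) \<and> Z i \<subseteq> X) \<and> (\<forall>i<d. Z i \<subset> Z (Suc i))}"

text \<open>Basis index set of (C^2)^{\<otimes>n}: bit strings phi, phi i for i < n, False beyond n.
  Endomorphisms are 2^n x 2^n matrices, points of the affine space with coordinates
  bits n \<times> bits n.\<close>

definition bits :: "nat \<Rightarrow> (nat \<Rightarrow> bool) set" where
  "bits n = {\<phi>. \<forall>i\<ge>n. \<not> \<phi> i}"

definition parity :: "nat \<Rightarrow> (nat \<Rightarrow> bool) \<Rightarrow> bool" where
  "parity n \<phi> = even (card {i. i < n \<and> \<phi> i})"

text \<open>b i a c = c-th standard coordinate of the basis vector e^i_a of V_i = C^2.\<close>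

definition is_basis_family :: "nat \<Rightarrow> (nat \<Rightarrow> bool \<Rightarrow> bool \<Rightarrow> complex) \<Rightarrow> bool" where
  "is_basis_family n b \<longleftrightarrow>
     (\<forall>i<n. b i False False * b i True True - b i False True * b i True False \<noteq> 0)"

text \<open>The tensor basis vector e^1_{phi 1} \<otimes> ... \<otimes> e^n_{phi n}.\<close>

definition tensor_vec :: "nat \<Rightarrow> (nat \<Rightarrow> bool \<Rightarrow> bool \<Rightarrow> complex) \<Rightarrow> (nat \<Rightarrow> bool)
    \<Rightarrow> (nat \<Rightarrow> bool) \<Rightarrow> complex" where
  "tensor_vec n b \<phi> = (\<lambda>\<chi>. if \<chi> \<in> bits n then (\<Prod>i<n. b i (\<phi> i) (\<chi> i)) else 0)"

definition mat_apply :: "nat \<Rightarrow> ((nat \<Rightarrow> bool) \<times> (nat \<Rightarrow> bool) \<Rightarrow> complex)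
    \<Rightarrow> ((nat \<Rightarrow> bool) \<Rightarrow> complex) \<Rightarrow> (nat \<Rightarrow> bool) \<Rightarrow> complex" where
  "mat_apply n \<rho> v = (\<lambda>\<chi>. if \<chi> \<in> bits n then (\<Sum>\<psi>\<in>bits n. \<rho> (\<chi>, \<psi>) * v \<psi>) else 0)"

definition parity_span :: "nat \<Rightarrow> (nat \<Rightarrow> bool \<Rightarrow> bool \<Rightarrow> complex) \<Rightarrow> bool
    \<Rightarrow> ((nat \<Rightarrow> bool) \<Rightarrow> complex) set" where
  "parity_span n b p = {v. \<exists>c. v = (\<lambda>\<chi>. \<Sum>\<psi>\<in>{\<psi>\<in>bits n. parity n \<psi> = p}. c \<psi> * tensor_vec n b \<psi> \<chi>)}"

definition trace_one_space :: "nat \<Rightarrow> ((nat \<Rightarrow> bool) \<times> (nat \<Rightarrow> bool) \<Rightarrow> complex) set" where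
  "trace_one_space n = {\<rho> \<in> aspace (bits n \<times> bits n). (\<Sum>\<phi>\<in>bits n. \<rho> (\<phi>, \<phi>)) = 1}"

definition x_states :: "nat \<Rightarrow> ((nat \<Rightarrow> bool) \<times> (nat \<Rightarrow> bool) \<Rightarrow> complex) set" where
  "x_states n = {\<rho> \<in> trace_one_space n. \<exists>b. is_basis_family n b \<and>
      (\<forall>p. \<forall>v\<in>parity_span n b p. mat_apply n \<rho> v \<in> parity_span n b p)}"

definition x_variety :: "nat \<Rightarrow> ((nat \<Rightarrow> bool) \<times> (nat \<Rightarrow> bool) \<Rightarrow> complex) set" where
  "x_variety n = zariski_closure (bits n \<times> bits n) (x_states n)"

end

theory Submission
  imports Defs "HOL-Computational_Algebra.Polynomial" "HOL-Library.FuncSet"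
begin


lemma polyfun_sum: "(\<And>i. i \<in> I \<Longrightarrow> polyfun V (f i)) \<Longrightarrow> polyfun V (\<lambda>x. \<Sum>i\<in>I. f i x)"
proof (induction I rule: infinite_finite_induct)
  case (infinite A) then show ?case by (simp add: polyfun.pconst)
next
  case empty then show ?case by (simp add: polyfun.pconst)
next
  case (insert a A) then show ?case by (simp add: polyfun.padd)
qed

lemma polyfun_prod: "(\<And>i. i \<in> I \<Longrightarrow> polyfun V (f i)) \<Longrightarrow> polyfun V (\<lambda>x. \<Prod>i\<in>I. f i x)"
proof (induction I rule: infinite_finite_induct)
  case (infinite A) then show ?case by (simp add: polyfun.pconst)
next
  case empty then show ?case by (simp add: polyfun.pconst)
next
  case (insert a A) then show ?case by (simp add: polyfun.pmult)
qed

lemma polyfun_power: "polyfun V f \<Longrightarrow> polyfun V (\<lambda>x. f x ^ k)"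
proof (induction k)
  case 0 then show ?case using polyfun.pconst[of V 1] by simp
next
  case (Suc k) then show ?case using polyfun.pmult[OF Suc(2) Suc(1)[OF Suc(2)]] by simp
qed

lemma polyfun_minus: "polyfun V f \<Longrightarrow> polyfun V g \<Longrightarrow> polyfun V (\<lambda>x. f x - g x)"
proof -
  assume a: "polyfun V f" "polyfun V g"
  have "polyfun V (\<lambda>x. f x + (-1) * g x)" using a by (intro polyfun.padd polyfun.pmult polyfun.pconst)
  then show ?thesis by simp
qed

lemma polyfun_comp:
  assumes "polyfun V f" "\<And>v. v \<in> V \<Longrightarrow> polyfun W (\<lambda>y. \<phi> y v)"
  shows "polyfun W (\<lambda>y. f (\<phi> y))"
  using assms
proof (induction rule: polyfun.induct)
  case (pconst c) show ?case by (rule polyfun.pconst)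
next
  case (pvar v) then show ?case by blast
next
  case (padd f g) then show ?case using polyfun.padd by blast
next
  case (pmult f g) then show ?case using polyfun.pmult by blast
qed

lemma polyfun_curve:
  assumes "polyfun V f" "\<And>v. v \<in> V \<Longrightarrow> \<exists>p. \<forall>t. \<gamma> t v = poly p t"
  shows "\<exists>p. \<forall>t. f (\<gamma> t) = poly p t"
  using assms
proof (induction rule: polyfun.induct)
  case (pconst c) then show ?case by (intro exI[of _ "[:c:]"]) simp
next
  case (pvar v) then show ?case by blast
next
  case (padd f g)
  then obtain p q where "\<forall>t. f (\<gamma> t) = poly p t" "\<forall>t. g (\<gamma> t) = poly q t" by blast
  then show ?case by (intro exI[of _ "p + q"]) simp
next
  case (pmult f g)
  then obtain p q where "\<forall>t. f (\<gamma> t) = poly p t" "\<forall>t. g (\<gamma> t) = poly q t" by blast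
  then show ?case by (intro exI[of _ "p * q"]) simp
qed

lemma aspace_line: "a \<in> aspace W \<Longrightarrow> b \<in> aspace W \<Longrightarrow> (\<lambda>v. a v + t * (b v - a v)) \<in> aspace W"
proof -
  assume "a \<in> aspace W" "b \<in> aspace W"
  then have "\<forall>v. v \<notin> W \<longrightarrow> a v = 0" "\<forall>v. v \<notin> W \<longrightarrow> b v = 0" unfolding aspace_def by auto
  then show ?thesis unfolding aspace_def by auto
qed

lemma polyfun_line: "polyfun V f \<Longrightarrow> \<exists>p. \<forall>t. f (\<lambda>v. a v + t * (b v - a v)) = poly p t"
proof (rule polyfun_curve[where \<gamma>="\<lambda>t v. a v + t * (b v - a v)"])
  fix v show "\<exists>p. \<forall>t. a v + t * (b v - a v) = poly p t"
    by (rule exI[of _ "[:a v, b v - a v:]"]) (simp add: mult.commute)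
qed

lemma polyfun_domain:
  assumes "polyfun U p" "polyfun U q" "\<And>x. x \<in> aspace W \<Longrightarrow> p x * q x = 0"
  shows "(\<forall>x\<in>aspace W. p x = 0) \<or> (\<forall>x\<in>aspace W. q x = 0)"
proof (rule ccontr)
  assume "\<not> ?thesis"
  then obtain a b where ab: "a \<in> aspace W" "b \<in> aspace W" "p a \<noteq> 0" "q b \<noteq> 0" by auto
  obtain P where P: "\<forall>t. p (\<lambda>v. a v + t * (b v - a v)) = poly P t" using polyfun_line[OF assms(1)] by blast
  obtain Q where Q: "\<forall>t. q (\<lambda>v. a v + t * (b v - a v)) = poly Q t" using polyfun_line[OF assms(2)] by blast
  have a0: "(\<lambda>v. a v + 0 * (b v - a v)) = a" by simp
  have b1: "(\<lambda>v. a v + 1 * (b v - a v)) = b" by simp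
  have "poly P 0 \<noteq> 0" using P ab a0 by metis
  hence "P \<noteq> 0" by auto
  have "poly Q 1 \<noteq> 0" using Q ab b1 by metis
  hence "Q \<noteq> 0" by auto
  hence "P * Q \<noteq> 0" using \<open>P \<noteq> 0\<close> by simp
  then obtain t where "poly (P * Q) t \<noteq> 0" using poly_all_0_iff_0 by blast
  moreover have "poly (P * Q) t = 0"
    using assms(3)[OF aspace_line[OF ab(1,2), of t]] P Q by simp
  ultimately show False by simp
qed

lemma polyfun_domain_pow:
  assumes "polyfun U p" "\<exists>x\<in>aspace W. p x \<noteq> 0"
  shows "\<exists>x\<in>aspace W. p x ^ k \<noteq> 0"
  using assms(2) by auto

subsection \<open>Zariski closed sets\<close>

lemma closed_aspace: "zariski_closed V (aspace V)"
  unfolding zariski_closed_def by (intro exI[of _ "{}"]) auto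

lemma closed_subset_aspace: "zariski_closed V S \<Longrightarrow> S \<subseteq> aspace V"
  unfolding zariski_closed_def by auto

lemma closed_Inter: "(\<And>S. S \<in> \<S> \<Longrightarrow> zariski_closed V S) \<Longrightarrow> \<S> \<noteq> {} \<Longrightarrow> zariski_closed V (\<Inter>\<S>)"
proof -
  assume h: "\<And>S. S \<in> \<S> \<Longrightarrow> zariski_closed V S" "\<S> \<noteq> {}"
  have "\<forall>S\<in>\<S>. \<exists>F. (\<forall>f\<in>F. polyfun V f) \<and> S = {x \<in> aspace V. \<forall>f\<in>F. f x = 0}"
    using h(1) unfolding zariski_closed_def by blast
  from bchoice[OF this] obtain F where F0: "\<forall>S\<in>\<S>. (\<forall>f\<in>F S. polyfun V f) \<and> S = {x \<in> aspace V. \<forall>f\<in>F S. f x = 0}"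
    by blast
  have F: "\<And>S. S \<in> \<S> \<Longrightarrow> (\<forall>f\<in>F S. polyfun V f) \<and> S = {x \<in> aspace V. \<forall>f\<in>F S. f x = 0}"
    using F0 by blast
  show ?thesis unfolding zariski_closed_def
  proof (intro exI[of _ "\<Union>S\<in>\<S>. F S"] conjI)
    show "\<forall>f\<in>\<Union>S\<in>\<S>. F S. polyfun V f" using F by blast
    show "\<Inter>\<S> = {x \<in> aspace V. \<forall>f\<in>\<Union>S\<in>\<S>. F S. f x = 0}"
    proof (intro equalityI subsetI)
      fix x assume x: "x \<in> \<Inter>\<S>"
      obtain S0 where "S0 \<in> \<S>" using h(2) by auto
      then have "x \<in> aspace V" using x F[of S0] by auto
      moreover have "\<forall>f\<in>\<Union>S\<in>\<S>. F S. f x = 0"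
      proof
        fix f assume "f \<in> (\<Union>S\<in>\<S>. F S)"
        then obtain S where S: "S \<in> \<S>" "f \<in> F S" by auto
        then have "x \<in> S" using x by auto
        then show "f x = 0" using F[OF S(1)] S(2) by auto
      qed
      ultimately show "x \<in> {x \<in> aspace V. \<forall>f\<in>\<Union>S\<in>\<S>. F S. f x = 0}" by simp
    next
      fix x assume "x \<in> {x \<in> aspace V. \<forall>f\<in>\<Union>S\<in>\<S>. F S. f x = 0}"
      then show "x \<in> \<Inter>\<S>"
      proof (intro InterI)
        fix S assume S: "S \<in> \<S>" and x: "x \<in> {x \<in> aspace V. \<forall>f\<in>\<Union>S\<in>\<S>. F S. f x = 0}"
        then have "\<forall>f\<in>F S. f x = 0" by auto
        then show "x \<in> S" using F[OF S] x by auto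
      qed
    qed
  qed
qed

lemma closure_closed: "A \<subseteq> aspace V \<Longrightarrow> zariski_closed V (zariski_closure V A)"
  unfolding zariski_closure_def
  by (rule closed_Inter) (use closed_aspace in auto)

lemma closure_sub: "A \<subseteq> aspace V \<Longrightarrow> A \<subseteq> zariski_closure V A"
  unfolding zariski_closure_def by auto

lemma closure_least: "zariski_closed V S \<Longrightarrow> A \<subseteq> S \<Longrightarrow> zariski_closure V A \<subseteq> S"
  unfolding zariski_closure_def by auto

lemma closure_mono: "A \<subseteq> B \<Longrightarrow> zariski_closure V A \<subseteq> zariski_closure V B"
  unfolding zariski_closure_def by auto

lemma closed_zero_set: "polyfun V f \<Longrightarrow> zariski_closed V {x \<in> aspace V. f x = 0}"
  unfolding zariski_closed_def by (intro exI[of _ "{f}"]) auto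

lemma closure_vanish:
  assumes "polyfun V f" "A \<subseteq> aspace V" "\<And>x. x \<in> A \<Longrightarrow> f x = 0" "x \<in> zariski_closure V A"
  shows "f x = 0"
proof -
  have "zariski_closure V A \<subseteq> {x \<in> aspace V. f x = 0}"
    by (rule closure_least[OF closed_zero_set[OF assms(1)]]) (use assms(2,3) in auto)
  then show ?thesis using assms(4) by auto
qed

lemma closed_vanish_witness:
  assumes "zariski_closed V Z" "x \<in> aspace V" "x \<notin> Z"
  shows "\<exists>f. polyfun V f \<and> (\<forall>z\<in>Z. f z = 0) \<and> f x \<noteq> 0"
  using assms unfolding zariski_closed_def by auto

lemma irreducible_domain:
  assumes "zariski_irreducible V Z" "polyfun V p" "polyfun V q" "\<And>x. x \<in> Z \<Longrightarrow> p x * q x = 0"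
  shows "(\<forall>x\<in>Z. p x = 0) \<or> (\<forall>x\<in>Z. q x = 0)"
proof -
  have cZ: "zariski_closed V Z" and irr: "\<And>S1 S2. zariski_closed V S1 \<Longrightarrow> zariski_closed V S2 \<Longrightarrow> Z = S1 \<union> S2 \<Longrightarrow> Z = S1 \<or> Z = S2"
    using assms(1) unfolding zariski_irreducible_def by auto
  obtain F where F: "\<forall>f\<in>F. polyfun V f" "Z = {x \<in> aspace V. \<forall>f\<in>F. f x = 0}"
    using cZ unfolding zariski_closed_def by auto
  define S1 where "S1 = {x \<in> aspace V. \<forall>f\<in>insert p F. f x = 0}"
  define S2 where "S2 = {x \<in> aspace V. \<forall>f\<in>insert q F. f x = 0}"
  have c1: "zariski_closed V S1" unfolding zariski_closed_def S1_def
    by (intro exI[of _ "insert p F"] conjI) (use F(1) assms(2) in auto)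
  have c2: "zariski_closed V S2" unfolding zariski_closed_def S2_def
    by (intro exI[of _ "insert q F"] conjI) (use F(1) assms(3) in auto)
  have "Z = S1 \<union> S2"
  proof (intro equalityI subsetI)
    fix x assume "x \<in> Z"
    then have "p x = 0 \<or> q x = 0" using assms(4) by simp
    then show "x \<in> S1 \<union> S2" using \<open>x \<in> Z\<close> F(2) unfolding S1_def S2_def by auto
  next
    fix x assume "x \<in> S1 \<union> S2"
    then show "x \<in> Z" using F(2) unfolding S1_def S2_def by auto
  qed
  then have "Z = S1 \<or> Z = S2" using irr c1 c2 by blast
  then show ?thesis unfolding S1_def S2_def by auto
qed

lemma irreducible_image:
  assumes img: "\<And>y. y \<in> aspace W \<Longrightarrow> \<phi> y \<in> aspace V"
    and pf: "\<And>v. v \<in> V \<Longrightarrow> polyfun U (\<lambda>y. \<phi> y v)"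
  shows "zariski_irreducible V (zariski_closure V (\<phi> ` aspace W))"
proof -
  let ?A = "\<phi> ` aspace W"
  have Asub: "?A \<subseteq> aspace V" using img by auto
  have ne: "zariski_closure V ?A \<noteq> {}"
  proof -
    have "(\<lambda>_. 0) \<in> aspace W" by (simp add: aspace_def)
    then have "\<phi> (\<lambda>_. 0) \<in> zariski_closure V ?A" using closure_sub[OF Asub] by blast
    then show ?thesis by blast
  qed
  have "zariski_closure V ?A = S1 \<or> zariski_closure V ?A = S2"
    if c1: "zariski_closed V S1" and c2: "zariski_closed V S2" and eq: "zariski_closure V ?A = S1 \<union> S2" for S1 S2
  proof (rule ccontr)
    assume neg: "\<not> (zariski_closure V ?A = S1 \<or> zariski_closure V ?A = S2)"
    have n1: "\<not> ?A \<subseteq> S1"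
    proof
      assume "?A \<subseteq> S1"
      then have "zariski_closure V ?A \<subseteq> S1" by (rule closure_least[OF c1])
      then have "zariski_closure V ?A = S1" using eq by blast
      then show False using neg by blast
    qed
    then obtain x1 where x1: "x1 \<in> ?A" "x1 \<notin> S1" by blast
    have n2: "\<not> ?A \<subseteq> S2"
    proof
      assume "?A \<subseteq> S2"
      then have "zariski_closure V ?A \<subseteq> S2" by (rule closure_least[OF c2])
      then have "zariski_closure V ?A = S2" using eq by blast
      then show False using neg by blast
    qed
    then obtain x2 where x2: "x2 \<in> ?A" "x2 \<notin> S2" by blast
    have "x1 \<in> aspace V" using x1(1) Asub by blast
    from closed_vanish_witness[OF c1 this x1(2)]
    obtain f1 where f1: "polyfun V f1" "\<forall>z\<in>S1. f1 z = 0" "f1 x1 \<noteq> 0" by blast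
    have "x2 \<in> aspace V" using x2(1) Asub by blast
    from closed_vanish_witness[OF c2 this x2(2)]
    obtain f2 where f2: "polyfun V f2" "\<forall>z\<in>S2. f2 z = 0" "f2 x2 \<noteq> 0" by blast
    have prod0: "\<And>y. y \<in> aspace W \<Longrightarrow> f1 (\<phi> y) * f2 (\<phi> y) = 0"
    proof -
      fix y assume y: "y \<in> aspace W"
      then have "\<phi> y \<in> ?A" by blast
      then have "\<phi> y \<in> S1 \<union> S2" using eq closure_sub[OF Asub] by blast
      then show "f1 (\<phi> y) * f2 (\<phi> y) = 0" using f1(2) f2(2) by auto
    qed
    have d: "(\<forall>y\<in>aspace W. f1 (\<phi> y) = 0) \<or> (\<forall>y\<in>aspace W. f2 (\<phi> y) = 0)"
      by (rule polyfun_domain[OF polyfun_comp[OF f1(1) pf] polyfun_comp[OF f2(1) pf] prod0])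
    obtain y1 where "y1 \<in> aspace W" "x1 = \<phi> y1" using x1(1) by blast
    moreover obtain y2 where "y2 \<in> aspace W" "x2 = \<phi> y2" using x2(1) by blast
    ultimately show False using d f1(3) f2(3) by blast
  qed
  then show ?thesis unfolding zariski_irreducible_def using closure_closed[OF Asub] ne by blast
qed



definition expbox :: "'a set \<Rightarrow> nat \<Rightarrow> ('a \<Rightarrow> nat) set" where
  "expbox K e = {\<alpha>. (\<forall>j. j \<notin> K \<longrightarrow> \<alpha> j = 0) \<and> (\<forall>j. \<alpha> j \<le> e)}"

lemma expbox_image: "expbox K e = (\<lambda>g j. if j \<in> K then g j else 0) ` (Pi\<^sub>E K (\<lambda>_. {..e}))"
proof (intro equalityI subsetI)
  fix \<alpha> assume a: "\<alpha> \<in> expbox K e"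
  let ?g = "restrict \<alpha> K"
  have "?g \<in> Pi\<^sub>E K (\<lambda>_. {..e})" using a by (auto simp: expbox_def)
  moreover have "\<alpha> = (\<lambda>j. if j \<in> K then ?g j else 0)" using a by (auto simp: expbox_def)
  ultimately show "\<alpha> \<in> (\<lambda>g j. if j \<in> K then g j else 0) ` (Pi\<^sub>E K (\<lambda>_. {..e}))" by blast
next
  fix \<alpha> assume "\<alpha> \<in> (\<lambda>g j. if j \<in> K then g j else 0) ` (Pi\<^sub>E K (\<lambda>_. {..e}))"
  then show "\<alpha> \<in> expbox K e" by (auto simp: expbox_def PiE_def Pi_def)
qed

lemma finite_expbox: "finite K \<Longrightarrow> finite (expbox K e)"
  unfolding expbox_image by (intro finite_imageI finite_PiE) auto

lemma card_expbox: "finite K \<Longrightarrow> card (expbox K e) = Suc e ^ card K"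
proof -
  assume K: "finite K"
  have inj: "inj_on (\<lambda>g j. if j \<in> K then g j else 0) (Pi\<^sub>E K (\<lambda>_. {..e}))"
  proof (rule inj_onI)
    fix g h assume g: "g \<in> Pi\<^sub>E K (\<lambda>_. {..e})" and h: "h \<in> Pi\<^sub>E K (\<lambda>_. {..e})"
      and eq: "(\<lambda>j. if j \<in> K then g j else 0) = (\<lambda>j. if j \<in> K then h j else 0)"
    show "g = h"
    proof (rule PiE_ext[OF g h])
      fix j assume "j \<in> K" then show "g j = h j" using fun_cong[OF eq, of j] by simp
    qed
  qed
  have "card (expbox K e) = card (Pi\<^sub>E K (\<lambda>_. {..e}))" unfolding expbox_image by (rule card_image[OF inj])
  also have "\<dots> = Suc e ^ card K" using K by (simp add: card_PiE)
  finally show ?thesis .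
qed

definition indep :: "'v set \<Rightarrow> ('v \<Rightarrow> complex) set \<Rightarrow> nat \<Rightarrow> bool" where
  "indep V S k \<longleftrightarrow> (\<exists>f. (\<forall>j<k. polyfun V (f j)) \<and>
     (\<forall>e c. (\<forall>x\<in>S. (\<Sum>\<alpha>\<in>expbox {..<k} e. c \<alpha> * (\<Prod>j<k. f j x ^ \<alpha> j)) = 0) \<longrightarrow> (\<forall>\<alpha>\<in>expbox {..<k} e. c \<alpha> = 0)))"

lemma indep_mono_set: "S \<subseteq> T \<Longrightarrow> indep V S k \<Longrightarrow> indep V T k"
  unfolding indep_def by blast

lemma expbox_zero: "expbox {..<0::nat} e = {\<lambda>_. 0}"
  by (auto simp: expbox_def)

lemma indep_zero: "S \<noteq> {} \<Longrightarrow> indep V S 0"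
  unfolding indep_def expbox_zero by auto

lemma expbox_split_bij:
  "bij_betw (\<lambda>(\<beta>, r). \<beta>(k := r)) (expbox {..<k} e \<times> {..e}) (expbox {..<Suc k} e)"
by (rule bij_betwI[where g = "\<lambda>\<alpha>. (\<alpha>(k := 0), \<alpha> k)"]) (auto simp: expbox_def)

lemma sum_expbox_split:
  "(\<Sum>\<alpha>\<in>expbox {..<Suc k} e. F \<alpha>) = (\<Sum>r\<le>e. \<Sum>\<beta>\<in>expbox {..<k} e. F (\<beta>(k := r)))"
proof -
  have "(\<Sum>\<alpha>\<in>expbox {..<Suc k} e. F \<alpha>) = sum (F \<circ> (\<lambda>(\<beta>, r). \<beta>(k := r))) (expbox {..<k} e \<times> {..e})"
    using sum.reindex_bij_betw[OF expbox_split_bij, of F] by (simp add: comp_def)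
  also have "\<dots> = (\<Sum>\<beta>\<in>expbox {..<k} e. \<Sum>r\<le>e. F (\<beta>(k := r)))"
    unfolding sum.cartesian_product by (intro sum.cong refl) (auto simp: comp_def)
  also have "\<dots> = (\<Sum>r\<le>e. \<Sum>\<beta>\<in>expbox {..<k} e. F (\<beta>(k := r)))"
    by (rule sum.swap)
  finally show ?thesis .
qed

lemma prod_upd_split:
  "(\<Prod>j<Suc k. (f(k := g)) j x ^ (\<beta>(k := r)) j) = g x ^ r * (\<Prod>j<k. f j x ^ \<beta> j)"
proof -
  have "(\<Prod>j<Suc k. (f(k := g)) j x ^ (\<beta>(k := r)) j) = (\<Prod>j<k. (f(k := g)) j x ^ (\<beta>(k := r)) j) * g x ^ r"
    by (simp add: prod.lessThan_Suc)
  also have "(\<Prod>j<k. (f(k := g)) j x ^ (\<beta>(k := r)) j) = (\<Prod>j<k. f j x ^ \<beta> j)"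
    by (intro prod.cong refl) auto
  finally show ?thesis by (simp add: mult.commute)
qed

lemma polyfun_evalP:
  assumes "\<forall>j<k. polyfun V (f j)"
  shows "polyfun V (\<lambda>x. \<Sum>\<alpha>\<in>A. c \<alpha> * (\<Prod>j<k. f j x ^ \<alpha> j))"
proof (rule polyfun_sum)
  fix \<alpha> assume "\<alpha> \<in> A"
  have "polyfun V (\<lambda>x. \<Prod>j<k. f j x ^ \<alpha> j)"
    by (rule polyfun_prod) (use assms polyfun_power in auto)
  then show "polyfun V (\<lambda>x. c \<alpha> * (\<Prod>j<k. f j x ^ \<alpha> j))"
    by (rule polyfun.pmult[OF polyfun.pconst])
qed

lemma indep_step:
  assumes W: "zariski_irreducible V W" and Zc: "zariski_closed V Z" and sub: "Z \<subseteq> W" "Z \<noteq> W"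
    and ind: "indep V Z k"
  shows "indep V W (Suc k)"
proof -
  obtain f where fp: "\<forall>j<k. polyfun V (f j)"
    and fi: "\<forall>e c. (\<forall>x\<in>Z. (\<Sum>\<alpha>\<in>expbox {..<k} e. c \<alpha> * (\<Prod>j<k. f j x ^ \<alpha> j)) = 0) \<longrightarrow> (\<forall>\<alpha>\<in>expbox {..<k} e. c \<alpha> = 0)"
    using ind unfolding indep_def by (elim exE conjE) simp
  have Wa: "W \<subseteq> aspace V" using closed_subset_aspace[of V W] W by (simp add: zariski_irreducible_def)
  obtain w0 where w0: "w0 \<in> W" "w0 \<notin> Z" using sub by blast
  have "w0 \<in> aspace V" using w0 Wa by blast
  from closed_vanish_witness[OF Zc this w0(2)]
  obtain g where g: "polyfun V g" "\<forall>z\<in>Z. g z = 0" "g w0 \<noteq> 0" by blast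
  define f' where "f' = f(k := g)"
  show ?thesis unfolding indep_def
  proof (rule exI[of _ f'], rule conjI)
    show "\<forall>j<Suc k. polyfun V (f' j)"
    proof (intro allI impI)
      fix j assume "j < Suc k"
      then show "polyfun V (f' j)" using fp g(1) by (cases "j = k") (auto simp: f'_def)
    qed
  next
    show "\<forall>e c. (\<forall>x\<in>W. (\<Sum>\<alpha>\<in>expbox {..<Suc k} e. c \<alpha> * (\<Prod>j<Suc k. f' j x ^ \<alpha> j)) = 0) \<longrightarrow> (\<forall>\<alpha>\<in>expbox {..<Suc k} e. c \<alpha> = 0)"
  proof (intro allI impI)
    fix e c assume H: "\<forall>x\<in>W. (\<Sum>\<alpha>\<in>expbox {..<Suc k} e. c \<alpha> * (\<Prod>j<Suc k. f' j x ^ \<alpha> j)) = 0"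
    define h where "h r x = (\<Sum>\<beta>\<in>expbox {..<k} e. c (\<beta>(k:=r)) * (\<Prod>j<k. f j x ^ \<beta> j))" for r x
    have tot: "(\<Sum>\<alpha>\<in>expbox {..<Suc k} e. c \<alpha> * (\<Prod>j<Suc k. f' j x ^ \<alpha> j)) = (\<Sum>r\<le>e. g x ^ r * h r x)" for x
      unfolding sum_expbox_split h_def f'_def prod_upd_split
      by (intro sum.cong refl) (simp add: sum_distrib_left algebra_simps)
    have ph: "polyfun V (h r)" for r
      unfolding h_def by (rule polyfun_evalP[OF fp])
    show "\<forall>\<alpha>\<in>expbox {..<Suc k} e. c \<alpha> = 0"
    proof (rule ccontr)
      assume "\<not> (\<forall>\<alpha>\<in>expbox {..<Suc k} e. c \<alpha> = 0)"
      then obtain \<alpha> where \<alpha>: "\<alpha> \<in> expbox {..<Suc k} e" "c \<alpha> \<noteq> 0" by blast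
      define R where "R = {r. r \<le> e \<and> (\<exists>\<beta>\<in>expbox {..<k} e. c (\<beta>(k:=r)) \<noteq> 0)}"
      have "\<alpha>(k := 0) \<in> expbox {..<k} e" using \<alpha>(1) by (auto simp: expbox_def)
      moreover have "(\<alpha>(k := 0))(k := \<alpha> k) = \<alpha>" by simp
      moreover have "\<alpha> k \<le> e" using \<alpha>(1) by (auto simp: expbox_def)
      ultimately have "\<alpha> k \<in> R" unfolding R_def using \<alpha>(2) by (metis (mono_tags, lifting) mem_Collect_eq)
      have finR: "finite R" unfolding R_def by (rule finite_subset[of _ "{..e}"]) auto
      define r0 where "r0 = Min R"
      have r0R: "r0 \<in> R" unfolding r0_def using finR \<open>\<alpha> k \<in> R\<close> by (intro Min_in) auto
      have r0le: "\<And>r. r \<in> R \<Longrightarrow> r0 \<le> r" unfolding r0_def using finR by simp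
      have r0e: "r0 \<le> e" using r0R unfolding R_def by simp
      have hz: "h r x = 0" if "r < r0" for r x
      proof -
        have "r \<notin> R" using r0le that by force
        then have "\<forall>\<beta>\<in>expbox {..<k} e. c (\<beta>(k:=r)) = 0" unfolding R_def using that r0e by auto
        then show ?thesis unfolding h_def by simp
      qed
      define Hf where "Hf x = (\<Sum>r\<in>{r0..e}. g x ^ (r - r0) * h r x)" for x
      have split: "(\<Sum>r\<le>e. g x ^ r * h r x) = g x ^ r0 * Hf x" for x
      proof -
        have dec: "{..e} = {..<r0} \<union> {r0..e}" using r0e by auto
        have "(\<Sum>r\<le>e. g x ^ r * h r x) = (\<Sum>r<r0. g x ^ r * h r x) + (\<Sum>r\<in>{r0..e}. g x ^ r * h r x)"
          unfolding dec by (rule sum.union_disjoint) auto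
        also have "(\<Sum>r<r0. g x ^ r * h r x) = 0" using hz by simp
        also have "(\<Sum>r\<in>{r0..e}. g x ^ r * h r x) = (\<Sum>r\<in>{r0..e}. g x ^ r0 * (g x ^ (r - r0) * h r x))"
        proof (intro sum.cong refl)
          fix r assume "r \<in> {r0..e}"
          then have "g x ^ r = g x ^ r0 * g x ^ (r - r0)" by (simp add: power_add[symmetric])
          then show "g x ^ r * h r x = g x ^ r0 * (g x ^ (r - r0) * h r x)" by simp
        qed
        finally show ?thesis unfolding Hf_def by (simp add: sum_distrib_left)
      qed
      have pg: "polyfun V (\<lambda>x. g x ^ r0)" by (rule polyfun_power[OF g(1)])
      have pH: "polyfun V Hf" unfolding Hf_def
        by (rule polyfun_sum, rule polyfun.pmult[OF polyfun_power[OF g(1)] ph])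
      have "\<And>x. x \<in> W \<Longrightarrow> g x ^ r0 * Hf x = 0" using H tot split by metis
      from irreducible_domain[OF W pg pH this]
      have "\<forall>x\<in>W. Hf x = 0" using g(3) w0(1) by auto
      then have hr0: "\<forall>z\<in>Z. h r0 z = 0"
      proof (intro ballI)
        fix z assume "\<forall>x\<in>W. Hf x = 0" and z: "z \<in> Z"
        then have "Hf z = 0" using sub by blast
        moreover have "Hf z = (\<Sum>r\<in>{r0..e}. (if r = r0 then h r z else 0))"
          unfolding Hf_def using g(2) z by (intro sum.cong refl) auto
        moreover have "(\<Sum>r\<in>{r0..e}. (if r = r0 then h r z else 0)) = h r0 z"
          using r0e by (simp add: sum.delta)
        ultimately show "h r0 z = 0" by simp
      qed
      have "\<forall>\<beta>\<in>expbox {..<k} e. c (\<beta>(k:=r0)) = 0"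
        using spec[OF spec[OF fi, of e], of "\<lambda>\<beta>. c (\<beta>(k:=r0))"] hr0 unfolding h_def by blast
      then show False using r0R unfolding R_def by auto
    qed
  qed
  qed
qed

lemma chain_indep:
  assumes "\<forall>i\<le>d. zariski_irreducible V (Z i)" "\<forall>i<d. Z i \<subset> Z (Suc i)"
  shows "indep V (Z d) d"
proof -
  have "i \<le> d \<Longrightarrow> indep V (Z i) i" for i
  proof (induction i)
    case 0
    then have "Z 0 \<noteq> {}" using assms(1) unfolding zariski_irreducible_def by auto
    then show ?case by (rule indep_zero)
  next
    case (Suc i)
    then have ind: "indep V (Z i) i" by simp
    have W: "zariski_irreducible V (Z (Suc i))" using assms(1) Suc(2) by blast
    have Zc: "zariski_closed V (Z i)" using assms(1) Suc(2) unfolding zariski_irreducible_def by simp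
    have "Z i \<subset> Z (Suc i)" using assms(2) Suc(2) by simp
    then show ?case using indep_step[OF W Zc _ _ ind] by blast
  qed
  then show ?thesis by simp
qed



definition polyspan :: "'p set \<Rightarrow> nat \<Rightarrow> (('p \<Rightarrow> complex) \<Rightarrow> complex) set" where
  "polyspan P m = {h. \<exists>a. \<forall>y\<in>aspace P. h y = (\<Sum>\<beta>\<in>expbox P m. a \<beta> * (\<Prod>p\<in>P. y p ^ \<beta> p))}"

lemma zero_in_expbox: "(\<lambda>_. 0) \<in> expbox P m"
  by (simp add: expbox_def)

lemma polyspan_const: "finite P \<Longrightarrow> (\<lambda>y. c) \<in> polyspan P m"
proof -
  assume fP: "finite P"
  let ?a = "\<lambda>\<beta>. if \<beta> = (\<lambda>_. 0) then c else 0"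
  have "\<forall>y\<in>aspace P. c = (\<Sum>\<beta>\<in>expbox P m. ?a \<beta> * (\<Prod>p\<in>P. y p ^ \<beta> p))"
  proof
    fix y :: "'a \<Rightarrow> complex"
    have "(\<Sum>\<beta>\<in>expbox P m. ?a \<beta> * (\<Prod>p\<in>P. y p ^ \<beta> p)) = (\<Sum>\<beta>\<in>expbox P m. if \<beta> = (\<lambda>_. 0) then c else 0)"
      by (intro sum.cong refl) auto
    also have "\<dots> = (if (\<lambda>_. 0) \<in> expbox P m then c else 0)" using finite_expbox[OF fP] by (simp add: sum.delta)
    also have "\<dots> = c" using zero_in_expbox[of P m] by simp
    finally show "c = (\<Sum>\<beta>\<in>expbox P m. ?a \<beta> * (\<Prod>p\<in>P. y p ^ \<beta> p))" by simp
  qed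
  then show ?thesis unfolding polyspan_def by (intro CollectI exI[of _ ?a])
qed

lemma polyspan_var: "finite P \<Longrightarrow> q \<in> P \<Longrightarrow> 1 \<le> m \<Longrightarrow> (\<lambda>y. y q) \<in> polyspan P m"
proof -
  assume fP: "finite P" and q: "q \<in> P" and m: "1 \<le> m"
  define \<delta> where "\<delta> = (\<lambda>p. if p = q then 1 else 0::nat)"
  have d: "\<delta> \<in> expbox P m" using q m by (auto simp: expbox_def \<delta>_def)
  let ?a = "\<lambda>\<beta>. if \<beta> = \<delta> then 1 else 0"
  have "\<forall>y\<in>aspace P. y q = (\<Sum>\<beta>\<in>expbox P m. ?a \<beta> * (\<Prod>p\<in>P. y p ^ \<beta> p))"
  proof
    fix y :: "'a \<Rightarrow> complex"
    have "(\<Sum>\<beta>\<in>expbox P m. ?a \<beta> * (\<Prod>p\<in>P. y p ^ \<beta> p)) = (\<Sum>\<beta>\<in>expbox P m. if \<beta> = \<delta> then (\<Prod>p\<in>P. y p ^ \<delta> p) else 0)"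
      by (intro sum.cong refl) auto
    also have "\<dots> = (\<Prod>p\<in>P. y p ^ \<delta> p)" using finite_expbox[OF fP] d by (simp add: sum.delta)
    also have "\<dots> = (\<Prod>p\<in>P. if p = q then y p else 1)" by (intro prod.cong refl) (simp add: \<delta>_def)
    also have "\<dots> = y q" using fP q by (simp add: prod.delta)
    finally show "y q = (\<Sum>\<beta>\<in>expbox P m. ?a \<beta> * (\<Prod>p\<in>P. y p ^ \<beta> p))" by simp
  qed
  then show ?thesis unfolding polyspan_def by (intro CollectI exI[of _ ?a])
qed

lemma expbox_mono: "m \<le> m' \<Longrightarrow> expbox P m \<subseteq> expbox P m'"
  by (auto simp: expbox_def intro: order_trans)

lemma polyspan_mono: "finite P \<Longrightarrow> m \<le> m' \<Longrightarrow> h \<in> polyspan P m \<Longrightarrow> h \<in> polyspan P m'"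
proof -
  assume fP: "finite P" and mm: "m \<le> m'" and h: "h \<in> polyspan P m"
  then obtain a where a: "\<forall>y\<in>aspace P. h y = (\<Sum>\<beta>\<in>expbox P m. a \<beta> * (\<Prod>p\<in>P. y p ^ \<beta> p))"
    unfolding polyspan_def by auto
  let ?a = "\<lambda>\<beta>. if \<beta> \<in> expbox P m then a \<beta> else 0"
  have "\<forall>y\<in>aspace P. h y = (\<Sum>\<beta>\<in>expbox P m'. ?a \<beta> * (\<Prod>p\<in>P. y p ^ \<beta> p))"
  proof
    fix y assume y: "y \<in> aspace P"
    have "(\<Sum>\<beta>\<in>expbox P m'. ?a \<beta> * (\<Prod>p\<in>P. y p ^ \<beta> p)) = (\<Sum>\<beta>\<in>expbox P m. ?a \<beta> * (\<Prod>p\<in>P. y p ^ \<beta> p))"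
      by (rule sum.mono_neutral_right[OF finite_expbox[OF fP] expbox_mono[OF mm]]) auto
    also have "\<dots> = (\<Sum>\<beta>\<in>expbox P m. a \<beta> * (\<Prod>p\<in>P. y p ^ \<beta> p))" by (intro sum.cong refl) auto
    finally show "h y = (\<Sum>\<beta>\<in>expbox P m'. ?a \<beta> * (\<Prod>p\<in>P. y p ^ \<beta> p))" using a y by simp
  qed
  then show ?thesis unfolding polyspan_def by (intro CollectI exI[of _ ?a])
qed

lemma polyspan_add: "h1 \<in> polyspan P m \<Longrightarrow> h2 \<in> polyspan P m \<Longrightarrow> (\<lambda>y. h1 y + h2 y) \<in> polyspan P m"
proof -
  assume "h1 \<in> polyspan P m" "h2 \<in> polyspan P m"
  then obtain a1 a2 where a1: "\<forall>y\<in>aspace P. h1 y = (\<Sum>\<beta>\<in>expbox P m. a1 \<beta> * (\<Prod>p\<in>P. y p ^ \<beta> p))"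
    and a2: "\<forall>y\<in>aspace P. h2 y = (\<Sum>\<beta>\<in>expbox P m. a2 \<beta> * (\<Prod>p\<in>P. y p ^ \<beta> p))"
    unfolding polyspan_def by auto
  have "\<forall>y\<in>aspace P. h1 y + h2 y = (\<Sum>\<beta>\<in>expbox P m. (a1 \<beta> + a2 \<beta>) * (\<Prod>p\<in>P. y p ^ \<beta> p))"
    using a1 a2 by (simp add: sum.distrib distrib_right)
  then show ?thesis unfolding polyspan_def by (intro CollectI exI[of _ "\<lambda>\<beta>. a1 \<beta> + a2 \<beta>"])
qed

lemma polyspan_mult:
  assumes fP: "finite P" and h1: "h1 \<in> polyspan P m1" and h2: "h2 \<in> polyspan P m2"
  shows "(\<lambda>y. h1 y * h2 y) \<in> polyspan P (m1 + m2)"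
proof -
  obtain a1 where a1: "\<forall>y\<in>aspace P. h1 y = (\<Sum>\<beta>\<in>expbox P m1. a1 \<beta> * (\<Prod>p\<in>P. y p ^ \<beta> p))"
    using h1 unfolding polyspan_def by auto
  obtain a2 where a2: "\<forall>y\<in>aspace P. h2 y = (\<Sum>\<beta>\<in>expbox P m2. a2 \<beta> * (\<Prod>p\<in>P. y p ^ \<beta> p))"
    using h2 unfolding polyspan_def by auto
  let ?S = "expbox P m1 \<times> expbox P m2"
  let ?g = "\<lambda>(\<beta>1, \<beta>2). (\<lambda>p. \<beta>1 p + \<beta>2 p)"
  let ?T = "expbox P (m1 + m2)"
  let ?H = "\<lambda>y (\<beta>1, \<beta>2). (a1 \<beta>1 * a2 \<beta>2) * (\<Prod>p\<in>P. y p ^ (\<beta>1 p + \<beta>2 p))"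
  let ?a = "\<lambda>\<gamma>. \<Sum>x\<in>{x. x \<in> ?S \<and> ?g x = \<gamma>}. (case x of (\<beta>1, \<beta>2) \<Rightarrow> a1 \<beta>1 * a2 \<beta>2)"
  have fS: "finite ?S" using finite_expbox[OF fP] by simp
  have fT: "finite ?T" using finite_expbox[OF fP] by simp
  have gST: "?g ` ?S \<subseteq> ?T" by (auto simp: expbox_def add_mono)
  have "\<forall>y\<in>aspace P. h1 y * h2 y = (\<Sum>\<gamma>\<in>?T. ?a \<gamma> * (\<Prod>p\<in>P. y p ^ \<gamma> p))"
  proof
    fix y assume y: "y \<in> aspace P"
    have "h1 y * h2 y = (\<Sum>\<beta>1\<in>expbox P m1. \<Sum>\<beta>2\<in>expbox P m2. (a1 \<beta>1 * (\<Prod>p\<in>P. y p ^ \<beta>1 p)) * (a2 \<beta>2 * (\<Prod>p\<in>P. y p ^ \<beta>2 p)))"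
      using a1 a2 y by (simp add: sum_product)
    also have "\<dots> = (\<Sum>x\<in>?S. ?H y x)"
      unfolding sum.cartesian_product
      by (intro sum.cong refl) (auto simp: power_add prod.distrib algebra_simps)
    also have "\<dots> = (\<Sum>\<gamma>\<in>?T. \<Sum>x\<in>{x. x \<in> ?S \<and> ?g x = \<gamma>}. ?H y x)"
      by (rule sum.group[OF fS fT gST, symmetric])
    also have "\<dots> = (\<Sum>\<gamma>\<in>?T. ?a \<gamma> * (\<Prod>p\<in>P. y p ^ \<gamma> p))"
    proof (intro sum.cong refl)
      fix \<gamma> assume "\<gamma> \<in> ?T"
      have "(\<Sum>x\<in>{x. x \<in> ?S \<and> ?g x = \<gamma>}. ?H y x) = (\<Sum>x\<in>{x. x \<in> ?S \<and> ?g x = \<gamma>}. (case x of (\<beta>1, \<beta>2) \<Rightarrow> a1 \<beta>1 * a2 \<beta>2) * (\<Prod>p\<in>P. y p ^ \<gamma> p))"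
        by (intro sum.cong refl) auto
      then show "(\<Sum>x\<in>{x. x \<in> ?S \<and> ?g x = \<gamma>}. ?H y x) = ?a \<gamma> * (\<Prod>p\<in>P. y p ^ \<gamma> p)"
        by (simp add: sum_distrib_right)
    qed
    finally show "h1 y * h2 y = (\<Sum>\<gamma>\<in>?T. ?a \<gamma> * (\<Prod>p\<in>P. y p ^ \<gamma> p))" .
  qed
  then show ?thesis unfolding polyspan_def by (intro CollectI exI[of _ ?a])
qed

lemma polyfun_polyspan: "polyfun P h \<Longrightarrow> finite P \<Longrightarrow> \<exists>m. h \<in> polyspan P m"
proof (induction rule: polyfun.induct)
  case (pconst c) then show ?case using polyspan_const by blast
next
  case (pvar v) then show ?case using polyspan_var[of P v 1] by blast
next
  case (padd f g)
  then obtain m1 m2 where "f \<in> polyspan P m1" "g \<in> polyspan P m2" by blast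
  then have "f \<in> polyspan P (max m1 m2)" "g \<in> polyspan P (max m1 m2)"
    using polyspan_mono[OF padd(5)] by (meson max.cobounded1 max.cobounded2)+
  then show ?case using polyspan_add by blast
next
  case (pmult f g)
  then obtain m1 m2 where "f \<in> polyspan P m1" "g \<in> polyspan P m2" by blast
  then show ?case using polyspan_mult[OF pmult(5)] by blast
qed

lemma polyspan_power: "finite P \<Longrightarrow> h \<in> polyspan P m \<Longrightarrow> (\<lambda>y. h y ^ r) \<in> polyspan P (m * r)"
proof (induction r)
  case 0 then show ?case using polyspan_const[of P 1] by simp
next
  case (Suc r)
  then have "(\<lambda>y. h y * h y ^ r) \<in> polyspan P (m + m * r)" by (intro polyspan_mult) auto
  then show ?case by simp
qed

lemma polyspan_prod:
  assumes fP: "finite P"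
  shows "finite J \<Longrightarrow> (\<And>j. j \<in> J \<Longrightarrow> h j \<in> polyspan P (d j)) \<Longrightarrow> (\<lambda>y. \<Prod>j\<in>J. h j y) \<in> polyspan P (\<Sum>j\<in>J. d j)"
proof (induction J rule: finite_induct)
  case empty then show ?case using polyspan_const[OF fP, of 1] by simp
next
  case (insert j J)
  then have "(\<lambda>y. h j y * (\<Prod>j\<in>J. h j y)) \<in> polyspan P (d j + (\<Sum>j\<in>J. d j))"
    by (intro polyspan_mult[OF fP]) auto
  then show ?case using insert by simp
qed

lemma lin_solve:
  fixes a :: "'n \<Rightarrow> 'q \<Rightarrow> complex"
  assumes "finite Q"
  shows "finite N \<Longrightarrow> card Q < card N \<Longrightarrow> \<exists>c. (\<exists>\<alpha>\<in>N. c \<alpha> \<noteq> 0) \<and> (\<forall>\<beta>\<in>Q. (\<Sum>\<alpha>\<in>N. c \<alpha> * a \<alpha> \<beta>) = 0)"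
  using assms
proof (induction Q arbitrary: N a rule: finite_induct)
  case empty
  then obtain \<alpha>0 where "\<alpha>0 \<in> N" by fastforce
  then show ?case by (intro exI[of _ "\<lambda>\<alpha>. if \<alpha> = \<alpha>0 then 1 else 0"]) auto
next
  case (insert \<beta> Q)
  show ?case
  proof (cases "\<forall>\<alpha>\<in>N. a \<alpha> \<beta> = 0")
    case True
    have "card Q < card N" using insert by simp
    then obtain c where c: "\<exists>\<alpha>\<in>N. c \<alpha> \<noteq> 0" "\<forall>\<beta>\<in>Q. (\<Sum>\<alpha>\<in>N. c \<alpha> * a \<alpha> \<beta>) = 0"
      using insert.IH[OF insert.prems(1)] by blast
    have "(\<Sum>\<alpha>\<in>N. c \<alpha> * a \<alpha> \<beta>) = 0" using True by simp
    then show ?thesis using c by (intro exI[of _ c]) auto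
  next
    case False
    then obtain \<alpha>0 where \<alpha>0: "\<alpha>0 \<in> N" "a \<alpha>0 \<beta> \<noteq> 0" by blast
    define N' where "N' = N - {\<alpha>0}"
    define a' where "a' \<alpha> \<beta>' = a \<alpha> \<beta>' - (a \<alpha> \<beta> / a \<alpha>0 \<beta>) * a \<alpha>0 \<beta>'" for \<alpha> \<beta>'
    have fN': "finite N'" using insert.prems(1) by (simp add: N'_def)
    have "card N' = card N - 1" using \<alpha>0(1) insert.prems(1) by (simp add: N'_def)
    moreover have "card (insert \<beta> Q) = Suc (card Q)" using insert.hyps by simp
    ultimately have "card Q < card N'" using insert.prems(2) by simp
    then obtain c' where c': "\<exists>\<alpha>\<in>N'. c' \<alpha> \<noteq> 0" "\<forall>\<beta>'\<in>Q. (\<Sum>\<alpha>\<in>N'. c' \<alpha> * a' \<alpha> \<beta>') = 0"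
      using insert.IH[OF fN', of a'] by blast
    define s where "s = (\<Sum>\<alpha>\<in>N'. c' \<alpha> * a \<alpha> \<beta>)"
    define c where "c \<alpha> = (if \<alpha> = \<alpha>0 then - s / a \<alpha>0 \<beta> else c' \<alpha>)" for \<alpha>
    have sumN: "(\<Sum>\<alpha>\<in>N. c \<alpha> * a \<alpha> \<gamma>) = c \<alpha>0 * a \<alpha>0 \<gamma> + (\<Sum>\<alpha>\<in>N'. c' \<alpha> * a \<alpha> \<gamma>)" for \<gamma>
    proof -
      have "(\<Sum>\<alpha>\<in>N. c \<alpha> * a \<alpha> \<gamma>) = c \<alpha>0 * a \<alpha>0 \<gamma> + (\<Sum>\<alpha>\<in>N'. c \<alpha> * a \<alpha> \<gamma>)"
        unfolding N'_def using sum.remove[OF insert.prems(1) \<alpha>0(1)] by simp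
      also have "(\<Sum>\<alpha>\<in>N'. c \<alpha> * a \<alpha> \<gamma>) = (\<Sum>\<alpha>\<in>N'. c' \<alpha> * a \<alpha> \<gamma>)"
        by (intro sum.cong refl) (auto simp: c_def N'_def)
      finally show ?thesis .
    qed
    have nz: "\<exists>\<alpha>\<in>N. c \<alpha> \<noteq> 0"
    proof -
      obtain \<alpha> where "\<alpha> \<in> N'" "c' \<alpha> \<noteq> 0" using c'(1) by blast
      then show ?thesis by (intro bexI[of _ \<alpha>]) (auto simp: c_def N'_def)
    qed
    have "\<forall>\<gamma>\<in>insert \<beta> Q. (\<Sum>\<alpha>\<in>N. c \<alpha> * a \<alpha> \<gamma>) = 0"
    proof
      fix \<gamma> assume "\<gamma> \<in> insert \<beta> Q"
      then consider "\<gamma> = \<beta>" | "\<gamma> \<in> Q" by blast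
      then show "(\<Sum>\<alpha>\<in>N. c \<alpha> * a \<alpha> \<gamma>) = 0"
      proof cases
        case 1
        then show ?thesis unfolding sumN using \<alpha>0(2) by (simp add: c_def s_def)
      next
        case 2
        have "0 = (\<Sum>\<alpha>\<in>N'. c' \<alpha> * a' \<alpha> \<gamma>)" using c'(2) 2 by simp
        also have "\<dots> = (\<Sum>\<alpha>\<in>N'. c' \<alpha> * a \<alpha> \<gamma>) - s / a \<alpha>0 \<beta> * a \<alpha>0 \<gamma>"
          unfolding a'_def s_def
          by (simp add: algebra_simps sum_subtractf sum_distrib_left sum_distrib_right sum_divide_distrib)
        also have "\<dots> = (\<Sum>\<alpha>\<in>N. c \<alpha> * a \<alpha> \<gamma>)" unfolding sumN by (simp add: c_def)
        finally show ?thesis by simp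
      qed
    qed
    then show ?thesis using nz by (intro exI[of _ c]) auto
  qed
qed

lemma count_ineq:
  fixes K D k :: nat
  assumes K: "1 \<le> K" and k: "D < k"
  shows "Suc (K * K ^ D) ^ D < Suc (K ^ D) ^ k"
proof -
  define e where "e = K ^ D"
  have "Suc (K * e) \<le> K * Suc e" using K by simp
  then have "Suc (K * e) ^ D \<le> (K * Suc e) ^ D" by (rule power_mono) simp
  also have "\<dots> = K ^ D * Suc e ^ D" by (rule power_mult_distrib)
  also have "\<dots> = e * Suc e ^ D" unfolding e_def by (rule refl)
  also have "\<dots> < Suc e * Suc e ^ D" by simp
  also have "\<dots> = Suc e ^ Suc D" by simp
  also have "\<dots> \<le> Suc e ^ k" using k by (intro power_increasing) auto
  finally show ?thesis unfolding e_def .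
qed

lemma counting:
  fixes \<phi> :: "('p \<Rightarrow> complex) \<Rightarrow> ('v \<Rightarrow> complex)"
  assumes fP: "finite P" and Sim: "S \<subseteq> \<phi> ` aspace P" and Sa: "S \<subseteq> aspace V"
    and pf: "\<And>v. v \<in> V \<Longrightarrow> polyfun P (\<lambda>y. \<phi> y v)"
    and k: "card P < k"
  shows "\<not> indep V (zariski_closure V S) k"
proof
  assume "indep V (zariski_closure V S) k"
  then obtain f where fp: "\<forall>j<k. polyfun V (f j)"
    and fi: "\<forall>e c. (\<forall>x\<in>zariski_closure V S. (\<Sum>\<alpha>\<in>expbox {..<k} e. c \<alpha> * (\<Prod>j<k. f j x ^ \<alpha> j)) = 0) \<longrightarrow> (\<forall>\<alpha>\<in>expbox {..<k} e. c \<alpha> = 0)"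
    unfolding indep_def by (elim exE conjE) simp
  define g where "g j y = f j (\<phi> y)" for j y
  have "\<forall>j. \<exists>m. j < k \<longrightarrow> g j \<in> polyspan P m"
  proof
    fix j
    show "\<exists>m. j < k \<longrightarrow> g j \<in> polyspan P m"
    proof (cases "j < k")
      case True
      have "polyfun P (g j)" unfolding g_def using fp True by (intro polyfun_comp[OF _ pf]) auto
      then show ?thesis using polyfun_polyspan[OF _ fP] by blast
    qed simp
  qed
  then obtain mf where mf: "\<And>j. j < k \<Longrightarrow> g j \<in> polyspan P (mf j)" by metis
  define m where "m = Suc (\<Sum>j<k. mf j)"
  have gm: "g j \<in> polyspan P m" if "j < k" for j
  proof -
    have "mf j \<le> (\<Sum>j<k. mf j)" using that by (intro member_le_sum) auto
    then show ?thesis using polyspan_mono[OF fP _ mf[OF that]] unfolding m_def by simp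
  qed
  define D where "D = card P"
  define K where "K = m * k"
  define e where "e = K ^ D"
  define M where "M = K * e"
  define N where "N = expbox {..<k::nat} e"
  define Q where "Q = expbox P M"
  have K1: "1 \<le> K" using k unfolding K_def m_def by simp
  have hN: "(\<lambda>y. \<Prod>j<k. g j y ^ \<alpha> j) \<in> polyspan P M" if \<alpha>: "\<alpha> \<in> N" for \<alpha>
  proof -
    have "(\<lambda>y. \<Prod>j<k. g j y ^ \<alpha> j) \<in> polyspan P (\<Sum>j<k. m * \<alpha> j)"
      by (rule polyspan_prod[OF fP]) (auto intro: polyspan_power[OF fP gm])
    moreover have "(\<Sum>j<k. m * \<alpha> j) \<le> (\<Sum>j<k::nat. m * e)"
      using \<alpha> by (intro sum_mono) (auto simp: N_def expbox_def)
    moreover have "(\<Sum>j<k::nat. m * e) = M" by (simp add: M_def K_def)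
    ultimately have "(\<Sum>j<k. m * \<alpha> j) \<le> M" by simp
    then show ?thesis by (rule polyspan_mono[OF fP]) fact
  qed
  have "\<forall>\<alpha>\<in>N. \<exists>a. \<forall>y\<in>aspace P. (\<Prod>j<k. g j y ^ \<alpha> j) = (\<Sum>\<beta>\<in>Q. a \<beta> * (\<Prod>p\<in>P. y p ^ \<beta> p))"
    using hN unfolding polyspan_def Q_def by blast
  from bchoice[OF this] obtain A where
    A: "\<forall>\<alpha>\<in>N. \<forall>y\<in>aspace P. (\<Prod>j<k. g j y ^ \<alpha> j) = (\<Sum>\<beta>\<in>Q. A \<alpha> \<beta> * (\<Prod>p\<in>P. y p ^ \<beta> p))"
    by blast
  have fN: "finite N" unfolding N_def by (rule finite_expbox) simp
  have fQ: "finite Q" unfolding Q_def by (rule finite_expbox[OF fP])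
  have "card Q = Suc M ^ D" unfolding Q_def D_def by (rule card_expbox[OF fP])
  moreover have "card N = Suc e ^ k" unfolding N_def using card_expbox[of "{..<k}" e] by simp
  moreover have "Suc M ^ D < Suc e ^ k" unfolding M_def e_def using count_ineq[OF K1, of D k] k D_def by simp
  ultimately have "card Q < card N" by simp
  from lin_solve[OF fQ fN this, of A] obtain c where
    c: "\<exists>\<alpha>\<in>N. c \<alpha> \<noteq> 0" "\<forall>\<beta>\<in>Q. (\<Sum>\<alpha>\<in>N. c \<alpha> * A \<alpha> \<beta>) = 0" by blast
  have vanS: "(\<Sum>\<alpha>\<in>N. c \<alpha> * (\<Prod>j<k. f j x ^ \<alpha> j)) = 0" if x: "x \<in> S" for x
  proof -
    obtain y where y: "y \<in> aspace P" "x = \<phi> y" using x Sim by blast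
    have "(\<Sum>\<alpha>\<in>N. c \<alpha> * (\<Prod>j<k. f j x ^ \<alpha> j)) = (\<Sum>\<alpha>\<in>N. c \<alpha> * (\<Sum>\<beta>\<in>Q. A \<alpha> \<beta> * (\<Prod>p\<in>P. y p ^ \<beta> p)))"
      using A y unfolding g_def by (intro sum.cong refl) auto
    also have "\<dots> = (\<Sum>\<alpha>\<in>N. \<Sum>\<beta>\<in>Q. c \<alpha> * A \<alpha> \<beta> * (\<Prod>p\<in>P. y p ^ \<beta> p))"
      by (simp add: sum_distrib_left mult.assoc)
    also have "\<dots> = (\<Sum>\<beta>\<in>Q. \<Sum>\<alpha>\<in>N. c \<alpha> * A \<alpha> \<beta> * (\<Prod>p\<in>P. y p ^ \<beta> p))"
      by (rule sum.swap)
    also have "\<dots> = (\<Sum>\<beta>\<in>Q. (\<Sum>\<alpha>\<in>N. c \<alpha> * A \<alpha> \<beta>) * (\<Prod>p\<in>P. y p ^ \<beta> p))"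
      by (simp add: sum_distrib_right)
    also have "\<dots> = 0" using c(2) by simp
    finally show ?thesis .
  qed
  have "\<forall>x\<in>zariski_closure V S. (\<Sum>\<alpha>\<in>N. c \<alpha> * (\<Prod>j<k. f j x ^ \<alpha> j)) = 0"
  proof
    fix x assume "x \<in> zariski_closure V S"
    then show "(\<Sum>\<alpha>\<in>N. c \<alpha> * (\<Prod>j<k. f j x ^ \<alpha> j)) = 0"
      using closure_vanish[where f="\<lambda>x. \<Sum>\<alpha>\<in>N. c \<alpha> * (\<Prod>j<k. f j x ^ \<alpha> j)", OF polyfun_evalP[OF fp] Sa vanS] by simp
  qed
  then have "\<forall>\<alpha>\<in>N. c \<alpha> = 0" using spec[OF spec[OF fi, of e], of c] unfolding N_def by blast
  then show False using c(1) by blast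
qed



lemma bits_Suc_eq: "bits (Suc n) = (\<lambda>(\<gamma>, b). \<gamma>(n := b)) ` (bits n \<times> UNIV)"
proof (intro equalityI subsetI)
  fix \<chi> assume x: "\<chi> \<in> bits (Suc n)"
  have "\<forall>i\<ge>n. \<not> (\<chi>(n := False)) i"
  proof (intro allI impI)
    fix i assume i: "n \<le> i"
    show "\<not> (\<chi>(n := False)) i"
    proof (cases "i = n")
      case False
      then have "Suc n \<le> i" using i by simp
      then show ?thesis using x False unfolding bits_def by simp
    qed simp
  qed
  then have "(\<chi>(n := False), \<chi> n) \<in> bits n \<times> UNIV" unfolding bits_def by simp
  moreover have "\<chi> = (\<lambda>(\<gamma>, b). \<gamma>(n := b)) (\<chi>(n := False), \<chi> n)" by simp
  ultimately show "\<chi> \<in> (\<lambda>(\<gamma>, b). \<gamma>(n := b)) ` (bits n \<times> UNIV)" by (rule rev_image_eqI)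
next
  fix \<chi> assume "\<chi> \<in> (\<lambda>(\<gamma>, b). \<gamma>(n := b)) ` (bits n \<times> UNIV)"
  then obtain \<gamma> b where g: "\<gamma> \<in> bits n" "\<chi> = \<gamma>(n := b)" by auto
  have "\<forall>i\<ge>Suc n. \<not> \<chi> i" using g unfolding bits_def by simp
  then show "\<chi> \<in> bits (Suc n)" unfolding bits_def by simp
qed

lemma bits_Suc_inj: "inj_on (\<lambda>(\<gamma>, b). \<gamma>(n := b)) (bits n \<times> UNIV)"
proof (rule inj_onI)
  fix x y assume x: "x \<in> bits n \<times> (UNIV :: bool set)" and y: "y \<in> bits n \<times> (UNIV :: bool set)"
    and eq: "(case x of (\<gamma>, b) \<Rightarrow> \<gamma>(n := b)) = (case y of (\<gamma>, b) \<Rightarrow> \<gamma>(n := b))"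
  obtain g1 b1 where x1: "x = (g1, b1)" by (cases x)
  obtain g2 b2 where y1: "y = (g2, b2)" by (cases y)
  have "g1 n = False" "g2 n = False" using x y x1 y1 by (auto simp: bits_def)
  moreover have "g1(n := b1) = g2(n := b2)" using eq x1 y1 by simp
  ultimately have "b1 = b2" "g1 = g2"
  proof -
    assume gn: "g1 n = False" "g2 n = False" and e: "g1(n := b1) = g2(n := b2)"
    show "b1 = b2" using fun_cong[OF e, of n] by simp
    show "g1 = g2"
    proof
      fix i show "g1 i = g2 i" using fun_cong[OF e, of i] gn by (cases "i = n") auto
    qed
  qed
  then show "x = y" using x1 y1 by simp
qed

lemma bits_0: "bits 0 = {\<lambda>_. False}"
  by (auto simp: bits_def)

lemma finite_bits: "finite (bits n)"
proof (induction n)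
  case 0 then show ?case by (simp add: bits_0)
next
  case (Suc n) then show ?case unfolding bits_Suc_eq by simp
qed

lemma card_bits: "card (bits n) = 2 ^ n"
proof (induction n)
  case 0 then show ?case by (simp add: bits_0)
next
  case (Suc n)
  have "card (bits (Suc n)) = card (bits n \<times> (UNIV :: bool set))"
    unfolding bits_Suc_eq by (rule card_image[OF bits_Suc_inj])
  also have "\<dots> = card (bits n) * card (UNIV :: bool set)" by (rule card_cartesian_product)
  finally show ?case using Suc by simp
qed

lemma sum_bits_Suc:
  "(\<Sum>\<chi>\<in>bits (Suc n). F \<chi>) = (\<Sum>\<gamma>\<in>bits n. F (\<gamma>(n := False)) + F (\<gamma>(n := True)))"
proof -
  have "(\<Sum>\<chi>\<in>bits (Suc n). F \<chi>) = (\<Sum>x\<in>bits n \<times> (UNIV :: bool set). F ((\<lambda>(\<gamma>, b). \<gamma>(n := b)) x))"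
    unfolding bits_Suc_eq by (rule sum.reindex[OF bits_Suc_inj, unfolded comp_def])
  also have "\<dots> = (\<Sum>\<gamma>\<in>bits n. \<Sum>b\<in>(UNIV :: bool set). F (\<gamma>(n := b)))"
    unfolding sum.cartesian_product by (intro sum.cong refl) auto
  also have "\<dots> = (\<Sum>\<gamma>\<in>bits n. F (\<gamma>(n := False)) + F (\<gamma>(n := True)))"
    by (simp add: UNIV_bool add.commute)
  finally show ?thesis .
qed

lemma sum_prod_bits:
  fixes F :: "nat \<Rightarrow> bool \<Rightarrow> complex"
  shows "(\<Sum>\<gamma>\<in>bits n. \<Prod>i<n. F i (\<gamma> i)) = (\<Prod>i<n. F i False + F i True)"
proof (induction n)
  case 0 then show ?case by (simp add: bits_0)
next
  case (Suc n)
  have eq: "(\<Prod>i<Suc n. F i ((\<gamma>(n := b)) i)) = (\<Prod>i<n. F i (\<gamma> i)) * F n b" for \<gamma> b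
  proof -
    have "(\<Prod>i<Suc n. F i ((\<gamma>(n := b)) i)) = (\<Prod>i<n. F i ((\<gamma>(n := b)) i)) * F n b"
      by (simp add: prod.lessThan_Suc)
    also have "(\<Prod>i<n. F i ((\<gamma>(n := b)) i)) = (\<Prod>i<n. F i (\<gamma> i))" by (intro prod.cong refl) auto
    finally show ?thesis .
  qed
  have "(\<Sum>\<gamma>\<in>bits (Suc n). \<Prod>i<Suc n. F i (\<gamma> i)) = (\<Sum>\<gamma>\<in>bits n. (\<Prod>i<n. F i (\<gamma> i)) * (F n False + F n True))"
    unfolding sum_bits_Suc eq by (intro sum.cong refl) (simp add: distrib_left)
  also have "\<dots> = (\<Sum>\<gamma>\<in>bits n. \<Prod>i<n. F i (\<gamma> i)) * (F n False + F n True)"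
    by (simp add: sum_distrib_right)
  finally show ?case using Suc by (simp add: prod.lessThan_Suc)
qed

lemma bits_eqI: "\<chi> \<in> bits n \<Longrightarrow> \<psi> \<in> bits n \<Longrightarrow> (\<forall>i<n. \<chi> i = \<psi> i) \<Longrightarrow> \<chi> = \<psi>"
  by (rule ext) (metis bits_def mem_Collect_eq not_le)

subsection \<open>Matrices indexed by bit strings\<close>

type_synonym mat = "(nat \<Rightarrow> bool) \<times> (nat \<Rightarrow> bool) \<Rightarrow> complex"
type_synonym m2 = "bool \<Rightarrow> bool \<Rightarrow> complex"

definition mmul :: "nat \<Rightarrow> mat \<Rightarrow> mat \<Rightarrow> mat" where
  "mmul n A B = (\<lambda>(\<chi>, \<psi>). if \<chi> \<in> bits n \<and> \<psi> \<in> bits n then (\<Sum>\<gamma>\<in>bits n. A (\<chi>, \<gamma>) * B (\<gamma>, \<psi>)) else 0)"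

definition tens :: "nat \<Rightarrow> (nat \<Rightarrow> m2) \<Rightarrow> mat" where
  "tens n C = (\<lambda>(\<chi>, \<psi>). if \<chi> \<in> bits n \<and> \<psi> \<in> bits n then (\<Prod>i<n. C i (\<chi> i) (\<psi> i)) else 0)"

definition m2mul :: "m2 \<Rightarrow> m2 \<Rightarrow> m2" where
  "m2mul A B = (\<lambda>a c. A a False * B False c + A a True * B True c)"

definition Id2 :: m2 where "Id2 = (\<lambda>a c. if a = c then 1 else 0)"

definition idm :: "nat \<Rightarrow> mat" where
  "idm n = (\<lambda>(\<chi>, \<psi>). if \<chi> \<in> bits n \<and> \<psi> \<in> bits n \<and> \<chi> = \<psi> then 1 else 0)"

definition trace :: "nat \<Rightarrow> mat \<Rightarrow> complex" where
  "trace n A = (\<Sum>\<chi>\<in>bits n. A (\<chi>, \<chi>))"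

lemma mmul_apply: "\<chi> \<in> bits n \<Longrightarrow> \<psi> \<in> bits n \<Longrightarrow> mmul n A B (\<chi>, \<psi>) = (\<Sum>\<gamma>\<in>bits n. A (\<chi>, \<gamma>) * B (\<gamma>, \<psi>))"
  by (simp add: mmul_def)

lemma mmul_out: "\<not> (\<chi> \<in> bits n \<and> \<psi> \<in> bits n) \<Longrightarrow> mmul n A B (\<chi>, \<psi>) = 0"
  unfolding mmul_def by auto

lemma tens_apply: "\<chi> \<in> bits n \<Longrightarrow> \<psi> \<in> bits n \<Longrightarrow> tens n C (\<chi>, \<psi>) = (\<Prod>i<n. C i (\<chi> i) (\<psi> i))"
  by (simp add: tens_def)

lemma tens_out: "\<not> (\<chi> \<in> bits n \<and> \<psi> \<in> bits n) \<Longrightarrow> tens n C (\<chi>, \<psi>) = 0"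
  unfolding tens_def by auto

lemma mmul_assoc: "mmul n (mmul n A B) C = mmul n A (mmul n B C)"
proof (rule ext, clarify)
  fix \<chi> \<psi>
  show "mmul n (mmul n A B) C (\<chi>, \<psi>) = mmul n A (mmul n B C) (\<chi>, \<psi>)"
  proof (cases "\<chi> \<in> bits n \<and> \<psi> \<in> bits n")
    case True
    have "mmul n (mmul n A B) C (\<chi>, \<psi>) = (\<Sum>\<gamma>\<in>bits n. (\<Sum>\<delta>\<in>bits n. A (\<chi>, \<delta>) * B (\<delta>, \<gamma>)) * C (\<gamma>, \<psi>))"
      using True by (simp add: mmul_apply)
    also have "\<dots> = (\<Sum>\<gamma>\<in>bits n. \<Sum>\<delta>\<in>bits n. A (\<chi>, \<delta>) * B (\<delta>, \<gamma>) * C (\<gamma>, \<psi>))"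
      by (simp add: sum_distrib_right)
    also have "\<dots> = (\<Sum>\<delta>\<in>bits n. \<Sum>\<gamma>\<in>bits n. A (\<chi>, \<delta>) * B (\<delta>, \<gamma>) * C (\<gamma>, \<psi>))"
      by (rule sum.swap)
    also have "\<dots> = (\<Sum>\<delta>\<in>bits n. A (\<chi>, \<delta>) * (\<Sum>\<gamma>\<in>bits n. B (\<delta>, \<gamma>) * C (\<gamma>, \<psi>)))"
      by (simp add: sum_distrib_left mult.assoc)
    also have "\<dots> = mmul n A (mmul n B C) (\<chi>, \<psi>)"
      using True by (intro sym[OF trans[OF mmul_apply sum.cong]]) (auto simp: mmul_apply)
    finally show ?thesis .
  next
    case False then show ?thesis by (simp add: mmul_out)
  qed
qed

lemma tens_mult: "mmul n (tens n A) (tens n B) = tens n (\<lambda>i. m2mul (A i) (B i))"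
proof (rule ext, clarify)
  fix \<chi> \<psi>
  show "mmul n (tens n A) (tens n B) (\<chi>, \<psi>) = tens n (\<lambda>i. m2mul (A i) (B i)) (\<chi>, \<psi>)"
  proof (cases "\<chi> \<in> bits n \<and> \<psi> \<in> bits n")
    case True
    have "mmul n (tens n A) (tens n B) (\<chi>, \<psi>) = (\<Sum>\<gamma>\<in>bits n. (\<Prod>i<n. A i (\<chi> i) (\<gamma> i)) * (\<Prod>i<n. B i (\<gamma> i) (\<psi> i)))"
      using True by (simp add: mmul_apply tens_apply)
    also have "\<dots> = (\<Sum>\<gamma>\<in>bits n. \<Prod>i<n. A i (\<chi> i) (\<gamma> i) * B i (\<gamma> i) (\<psi> i))"
      by (simp add: prod.distrib)
    also have "\<dots> = (\<Prod>i<n. A i (\<chi> i) False * B i False (\<psi> i) + A i (\<chi> i) True * B i True (\<psi> i))"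
      by (rule sum_prod_bits)
    also have "\<dots> = tens n (\<lambda>i. m2mul (A i) (B i)) (\<chi>, \<psi>)"
      using True by (simp add: tens_apply m2mul_def)
    finally show ?thesis .
  next
    case False then show ?thesis by (simp add: mmul_out tens_out)
  qed
qed

lemma tens_Id2: "tens n (\<lambda>i. Id2) = idm n"
proof (rule ext, clarify)
  fix \<chi> \<psi>
  show "tens n (\<lambda>i. Id2) (\<chi>, \<psi>) = idm n (\<chi>, \<psi>)"
  proof (cases "\<chi> \<in> bits n \<and> \<psi> \<in> bits n")
    case True
    show ?thesis
    proof (cases "\<chi> = \<psi>")
      case True
      then show ?thesis using \<open>\<chi> \<in> bits n \<and> \<psi> \<in> bits n\<close> by (simp add: tens_apply idm_def Id2_def)
    next
      case False
      then obtain i where i: "i < n" "\<chi> i \<noteq> \<psi> i" using bits_eqI True by blast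
      have "(\<Prod>i<n. Id2 (\<chi> i) (\<psi> i)) = 0"
        using i by (intro prod_zero) (auto simp: Id2_def intro!: bexI[of _ i])
      then show ?thesis using True False by (simp add: tens_apply idm_def)
    qed
  next
    case False then show ?thesis by (auto simp: tens_out idm_def)
  qed
qed

definition zero_out :: "nat \<Rightarrow> mat \<Rightarrow> bool" where
  "zero_out n A \<longleftrightarrow> (\<forall>\<chi> \<psi>. \<not> (\<chi> \<in> bits n \<and> \<psi> \<in> bits n) \<longrightarrow> A (\<chi>, \<psi>) = 0)"

lemma mmul_idm_left: "zero_out n A \<Longrightarrow> mmul n (idm n) A = A"
proof (rule ext, clarify)
  fix \<chi> \<psi> assume z: "zero_out n A"
  show "mmul n (idm n) A (\<chi>, \<psi>) = A (\<chi>, \<psi>)"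
  proof (cases "\<chi> \<in> bits n \<and> \<psi> \<in> bits n")
    case True
    have "mmul n (idm n) A (\<chi>, \<psi>) = (\<Sum>\<gamma>\<in>bits n. if \<gamma> = \<chi> then A (\<chi>, \<psi>) else 0)"
      using True by (simp add: mmul_apply idm_def) (intro sum.cong refl, auto)
    also have "\<dots> = A (\<chi>, \<psi>)" using True finite_bits by (simp add: sum.delta)
    finally show ?thesis .
  next
    case False then show ?thesis using z by (simp add: mmul_out zero_out_def)
  qed
qed

lemma mmul_idm_right: "zero_out n A \<Longrightarrow> mmul n A (idm n) = A"
proof (rule ext, clarify)
  fix \<chi> \<psi> assume z: "zero_out n A"
  show "mmul n A (idm n) (\<chi>, \<psi>) = A (\<chi>, \<psi>)"
  proof (cases "\<chi> \<in> bits n \<and> \<psi> \<in> bits n")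
    case True
    have "mmul n A (idm n) (\<chi>, \<psi>) = (\<Sum>\<gamma>\<in>bits n. if \<gamma> = \<psi> then A (\<chi>, \<psi>) else 0)"
      using True by (simp add: mmul_apply idm_def) (intro sum.cong refl, auto)
    also have "\<dots> = A (\<chi>, \<psi>)" using True finite_bits by (simp add: sum.delta)
    finally show ?thesis .
  next
    case False then show ?thesis using z by (simp add: mmul_out zero_out_def)
  qed
qed

lemma zero_out_mmul: "zero_out n (mmul n A B)"
  by (simp add: zero_out_def mmul_out)

lemma zero_out_tens: "zero_out n (tens n C)"
  by (simp add: zero_out_def tens_out)

lemma trace_mmul_comm: "trace n (mmul n A B) = trace n (mmul n B A)"
proof -
  have "trace n (mmul n A B) = (\<Sum>\<chi>\<in>bits n. \<Sum>\<gamma>\<in>bits n. A (\<chi>, \<gamma>) * B (\<gamma>, \<chi>))"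
    unfolding trace_def by (intro sum.cong refl) (simp add: mmul_apply)
  also have "\<dots> = (\<Sum>\<gamma>\<in>bits n. \<Sum>\<chi>\<in>bits n. B (\<gamma>, \<chi>) * A (\<chi>, \<gamma>))"
    by (subst sum.swap) (simp add: mult.commute)
  also have "\<dots> = trace n (mmul n B A)"
    unfolding trace_def by (intro sum.cong refl) (simp add: mmul_apply)
  finally show ?thesis .
qed



definition Cm :: "complex \<Rightarrow> complex \<Rightarrow> m2" where
  "Cm s t = (\<lambda>a c. if \<not> a \<and> \<not> c then 1 else if \<not> a \<and> c then s else if a \<and> \<not> c then t else 1 + t * s)"

definition Ci :: "complex \<Rightarrow> complex \<Rightarrow> m2" where
  "Ci s t = (\<lambda>a c. if \<not> a \<and> \<not> c then 1 + s * t else if \<not> a \<and> c then - s else if a \<and> \<not> c then - t else 1)"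

lemma Cm_Ci: "m2mul (Cm s t) (Ci s t) = Id2"
proof (intro ext)
  fix a c show "m2mul (Cm s t) (Ci s t) a c = Id2 a c"
    by (cases a; cases c) (simp_all add: m2mul_def Cm_def Ci_def Id2_def algebra_simps)
qed

lemma Ci_Cm: "m2mul (Ci s t) (Cm s t) = Id2"
proof (intro ext)
  fix a c show "m2mul (Ci s t) (Cm s t) a c = Id2 a c"
    by (cases a; cases c) (simp_all add: m2mul_def Cm_def Ci_def Id2_def algebra_simps)
qed

type_synonym par = "((nat \<Rightarrow> bool) \<times> (nat \<Rightarrow> bool)) + (nat \<times> bool)"

definition zb :: "nat \<Rightarrow> bool" where "zb = (\<lambda>_. False)"

lemma zb_bits: "zb \<in> bits n" by (simp add: zb_def bits_def)

definition Mset :: "nat \<Rightarrow> ((nat \<Rightarrow> bool) \<times> (nat \<Rightarrow> bool)) set" where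
  "Mset n = {(\<chi>, \<psi>). \<chi> \<in> bits n \<and> \<psi> \<in> bits n \<and> parity n \<chi> = parity n \<psi> \<and> (\<chi>, \<psi>) \<noteq> (zb, zb)}"

definition Pset :: "nat \<Rightarrow> par set" where
  "Pset n = Inl ` Mset n \<union> Inr ` ({..<n} \<times> UNIV)"

definition Wm :: "nat \<Rightarrow> (par \<Rightarrow> complex) \<Rightarrow> mat" where
  "Wm n y = tens n (\<lambda>i. Cm (y (Inr (i, False))) (y (Inr (i, True))))"

definition Wi :: "nat \<Rightarrow> (par \<Rightarrow> complex) \<Rightarrow> mat" where
  "Wi n y = tens n (\<lambda>i. Ci (y (Inr (i, False))) (y (Inr (i, True))))"

definition Mof :: "nat \<Rightarrow> (par \<Rightarrow> complex) \<Rightarrow> mat" where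
  "Mof n y = (\<lambda>(\<chi>, \<psi>). if \<chi> \<in> bits n \<and> \<psi> \<in> bits n \<and> parity n \<chi> = parity n \<psi> then
      (if \<chi> = zb \<and> \<psi> = zb then 1 - (\<Sum>\<chi>'\<in>bits n - {zb}. y (Inl (\<chi>', \<chi>'))) else y (Inl (\<chi>, \<psi>)))
    else 0)"

definition phi :: "nat \<Rightarrow> (par \<Rightarrow> complex) \<Rightarrow> mat" where
  "phi n y = mmul n (mmul n (Wm n y) (Mof n y)) (Wi n y)"

lemma Wi_Wm: "mmul n (Wi n y) (Wm n y) = idm n"
  unfolding Wi_def Wm_def tens_mult Ci_Cm tens_Id2 ..

lemma Wm_Wi: "mmul n (Wm n y) (Wi n y) = idm n"
  unfolding Wi_def Wm_def tens_mult Cm_Ci tens_Id2 ..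

lemma zero_out_Mof: "zero_out n (Mof n y)"
  unfolding zero_out_def Mof_def by auto

lemma trace_Mof: "trace n (Mof n y) = 1"
proof -
  have "trace n (Mof n y) = Mof n y (zb, zb) + (\<Sum>\<chi>\<in>bits n - {zb}. Mof n y (\<chi>, \<chi>))"
    unfolding trace_def using sum.remove[OF finite_bits zb_bits, of "\<lambda>\<chi>. Mof n y (\<chi>, \<chi>)"] by simp
  also have "(\<Sum>\<chi>\<in>bits n - {zb}. Mof n y (\<chi>, \<chi>)) = (\<Sum>\<chi>\<in>bits n - {zb}. y (Inl (\<chi>, \<chi>)))"
    by (intro sum.cong refl) (auto simp: Mof_def)
  also have "Mof n y (zb, zb) = 1 - (\<Sum>\<chi>'\<in>bits n - {zb}. y (Inl (\<chi>', \<chi>')))"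
    using zb_bits[of n] by (simp add: Mof_def)
  finally show ?thesis by simp
qed

lemma Mof_block: "parity n \<alpha> \<noteq> parity n \<beta> \<Longrightarrow> Mof n y (\<alpha>, \<beta>) = 0"
  by (simp add: Mof_def)

lemma phi_WmM: "mmul n (phi n y) (Wm n y) = mmul n (Wm n y) (Mof n y)"
  unfolding phi_def mmul_assoc Wi_Wm
  by (simp add: mmul_idm_right zero_out_Mof flip: mmul_assoc)

lemma trace_phi: "trace n (phi n y) = 1"
proof -
  have "trace n (phi n y) = trace n (mmul n (Wi n y) (mmul n (Wm n y) (Mof n y)))"
    unfolding phi_def by (rule trace_mmul_comm)
  also have "\<dots> = trace n (Mof n y)"
    by (simp add: Wi_Wm mmul_idm_left zero_out_Mof flip: mmul_assoc)
  finally show ?thesis using trace_Mof by simp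
qed

lemma phi_aspace: "phi n y \<in> aspace (bits n \<times> bits n)"
  unfolding aspace_def phi_def using zero_out_mmul unfolding zero_out_def by auto

lemma Inr_Pset: "i < n \<Longrightarrow> Inr (i, b) \<in> Pset n"
  by (simp add: Pset_def)

lemma polyfun_Cm: "i < n \<Longrightarrow> polyfun (Pset n) (\<lambda>y. Cm (y (Inr (i, False))) (y (Inr (i, True))) a c)"
proof -
  assume i: "i < n"
  have vF: "polyfun (Pset n) (\<lambda>y. y (Inr (i, False)))" using i by (intro polyfun.pvar Inr_Pset)
  have vT: "polyfun (Pset n) (\<lambda>y. y (Inr (i, True)))" using i by (intro polyfun.pvar Inr_Pset)
  show ?thesis
  proof (cases a; cases c)
    assume "a" "c"
    then show ?thesis unfolding Cm_def using polyfun.padd[OF polyfun.pconst polyfun.pmult[OF vT vF]] by simp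
  next
    assume "a" "\<not> c" then show ?thesis unfolding Cm_def using vT by simp
  next
    assume "\<not> a" "c" then show ?thesis unfolding Cm_def using vF by simp
  next
    assume "\<not> a" "\<not> c" then show ?thesis unfolding Cm_def using polyfun.pconst by simp
  qed
qed

lemma polyfun_Ci: "i < n \<Longrightarrow> polyfun (Pset n) (\<lambda>y. Ci (y (Inr (i, False))) (y (Inr (i, True))) a c)"
proof -
  assume i: "i < n"
  have vF: "polyfun (Pset n) (\<lambda>y. y (Inr (i, False)))" using i by (intro polyfun.pvar Inr_Pset)
  have vT: "polyfun (Pset n) (\<lambda>y. y (Inr (i, True)))" using i by (intro polyfun.pvar Inr_Pset)
  show ?thesis
  proof (cases a; cases c)
    assume "a" "c"
    then show ?thesis unfolding Ci_def using polyfun.pconst by simp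
  next
    assume "a" "\<not> c" then show ?thesis unfolding Ci_def using polyfun.pmult[OF polyfun.pconst[of _ "-1"] vT] by simp
  next
    assume "\<not> a" "c" then show ?thesis unfolding Ci_def using polyfun.pmult[OF polyfun.pconst[of _ "-1"] vF] by simp
  next
    assume "\<not> a" "\<not> c" then show ?thesis unfolding Ci_def using polyfun.padd[OF polyfun.pconst polyfun.pmult[OF vF vT]] by simp
  qed
qed

lemma polyfun_Wm: "polyfun (Pset n) (\<lambda>y. Wm n y v)"
proof (cases v)
  case (Pair \<chi> \<psi>)
  show ?thesis
  proof (cases "\<chi> \<in> bits n \<and> \<psi> \<in> bits n")
    case True
    then have "(\<lambda>y. Wm n y v) = (\<lambda>y. \<Prod>i<n. Cm (y (Inr (i, False))) (y (Inr (i, True))) (\<chi> i) (\<psi> i))"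
      unfolding Wm_def Pair by (simp add: tens_apply)
    moreover have "polyfun (Pset n) (\<lambda>y. \<Prod>i<n. Cm (y (Inr (i, False))) (y (Inr (i, True))) (\<chi> i) (\<psi> i))"
      by (rule polyfun_prod) (simp add: polyfun_Cm)
    ultimately show ?thesis by simp
  next
    case False
    then have "(\<lambda>y. Wm n y v) = (\<lambda>y. 0)" unfolding Wm_def Pair by (simp add: tens_out)
    then show ?thesis using polyfun.pconst by simp
  qed
qed

lemma polyfun_Wi: "polyfun (Pset n) (\<lambda>y. Wi n y v)"
proof (cases v)
  case (Pair \<chi> \<psi>)
  show ?thesis
  proof (cases "\<chi> \<in> bits n \<and> \<psi> \<in> bits n")
    case True
    then have "(\<lambda>y. Wi n y v) = (\<lambda>y. \<Prod>i<n. Ci (y (Inr (i, False))) (y (Inr (i, True))) (\<chi> i) (\<psi> i))"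
      unfolding Wi_def Pair by (simp add: tens_apply)
    moreover have "polyfun (Pset n) (\<lambda>y. \<Prod>i<n. Ci (y (Inr (i, False))) (y (Inr (i, True))) (\<chi> i) (\<psi> i))"
      by (rule polyfun_prod) (simp add: polyfun_Ci)
    ultimately show ?thesis by simp
  next
    case False
    then have "(\<lambda>y. Wi n y v) = (\<lambda>y. 0)" unfolding Wi_def Pair by (simp add: tens_out)
    then show ?thesis using polyfun.pconst by simp
  qed
qed

lemma polyfun_Mof: "polyfun (Pset n) (\<lambda>y. Mof n y v)"
proof (cases v)
  case (Pair \<chi> \<psi>)
  show ?thesis
  proof (cases "\<chi> \<in> bits n \<and> \<psi> \<in> bits n \<and> parity n \<chi> = parity n \<psi>")
    case True
    show ?thesis
    proof (cases "\<chi> = zb \<and> \<psi> = zb")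
      case True
      then have "(\<lambda>y. Mof n y v) = (\<lambda>y. 1 - (\<Sum>\<chi>'\<in>bits n - {zb}. y (Inl (\<chi>', \<chi>'))))"
        using \<open>\<chi> \<in> bits n \<and> \<psi> \<in> bits n \<and> parity n \<chi> = parity n \<psi>\<close> unfolding Mof_def Pair by simp
      moreover have "polyfun (Pset n) (\<lambda>y. 1 - (\<Sum>\<chi>'\<in>bits n - {zb}. y (Inl (\<chi>', \<chi>'))))"
      proof (rule polyfun_minus[OF polyfun.pconst polyfun_sum])
        fix \<chi>' assume "\<chi>' \<in> bits n - {zb}"
        then have "Inl (\<chi>', \<chi>') \<in> Pset n" unfolding Pset_def Mset_def by auto
        then show "polyfun (Pset n) (\<lambda>y. y (Inl (\<chi>', \<chi>')))" by (rule polyfun.pvar)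
      qed
      ultimately show ?thesis by simp
    next
      case False
      then have "(\<lambda>y. Mof n y v) = (\<lambda>y. y (Inl (\<chi>, \<psi>)))"
        using True unfolding Mof_def Pair by auto
      moreover have "Inl (\<chi>, \<psi>) \<in> Pset n" using True False unfolding Pset_def Mset_def by auto
      ultimately show ?thesis using polyfun.pvar by simp
    qed
  next
    case False
    then have "(\<lambda>y. Mof n y v) = (\<lambda>y. 0)" unfolding Mof_def Pair by auto
    then show ?thesis using polyfun.pconst by simp
  qed
qed

lemma polyfun_phi: "polyfun (Pset n) (\<lambda>y. phi n y v)"
proof (cases v)
  case (Pair \<chi> \<psi>)
  show ?thesis
  proof (cases "\<chi> \<in> bits n \<and> \<psi> \<in> bits n")
    case True
    then have "(\<lambda>y. phi n y v) = (\<lambda>y. \<Sum>\<gamma>\<in>bits n. (\<Sum>\<delta>\<in>bits n. Wm n y (\<chi>, \<delta>) * Mof n y (\<delta>, \<gamma>)) * Wi n y (\<gamma>, \<psi>))"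
      unfolding phi_def Pair by (intro ext) (auto simp: mmul_apply intro!: sum.cong)
    moreover have "polyfun (Pset n) (\<lambda>y. \<Sum>\<gamma>\<in>bits n. (\<Sum>\<delta>\<in>bits n. Wm n y (\<chi>, \<delta>) * Mof n y (\<delta>, \<gamma>)) * Wi n y (\<gamma>, \<psi>))"
      by (intro polyfun_sum polyfun.pmult polyfun_Wm polyfun_Wi polyfun_Mof)
    ultimately show ?thesis by simp
  next
    case False
    then have "(\<lambda>y. phi n y v) = (\<lambda>y. 0)" unfolding phi_def Pair by (simp add: mmul_out)
    then show ?thesis using polyfun.pconst by simp
  qed
qed



definition bfam :: "(par \<Rightarrow> complex) \<Rightarrow> nat \<Rightarrow> bool \<Rightarrow> bool \<Rightarrow> complex" where
  "bfam y i a c = Cm (y (Inr (i, False))) (y (Inr (i, True))) c a"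

lemma tensor_vec_bfam: "\<psi> \<in> bits n \<Longrightarrow> tensor_vec n (bfam y) \<psi> \<chi> = Wm n y (\<chi>, \<psi>)"
  unfolding tensor_vec_def Wm_def bfam_def by (simp add: tens_def)

lemma bfam_basis: "is_basis_family n (bfam y)"
  unfolding is_basis_family_def bfam_def Cm_def by (simp add: algebra_simps)

lemma phi_preserves:
  assumes v: "v \<in> parity_span n (bfam y) p"
  shows "mat_apply n (phi n y) v \<in> parity_span n (bfam y) p"
proof -
  let ?B = "{\<psi> \<in> bits n. parity n \<psi> = p}"
  let ?M = "Mof n y" and ?W = "Wm n y"
  obtain c where c: "v = (\<lambda>\<chi>. \<Sum>\<psi>\<in>?B. c \<psi> * tensor_vec n (bfam y) \<psi> \<chi>)"
    using v unfolding parity_span_def by blast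
  define c' where "c' \<alpha> = (\<Sum>\<psi>\<in>?B. c \<psi> * ?M (\<alpha>, \<psi>))" for \<alpha>
  have fB: "finite ?B" using finite_bits by simp
  have vW: "v \<gamma> = (\<Sum>\<psi>\<in>?B. c \<psi> * ?W (\<gamma>, \<psi>))" for \<gamma>
    unfolding c by (intro sum.cong refl) (simp add: tensor_vec_bfam)
  have "mat_apply n (phi n y) v = (\<lambda>\<chi>. \<Sum>\<alpha>\<in>?B. c' \<alpha> * tensor_vec n (bfam y) \<alpha> \<chi>)"
  proof (rule ext)
    fix \<chi>
    show "mat_apply n (phi n y) v \<chi> = (\<Sum>\<alpha>\<in>?B. c' \<alpha> * tensor_vec n (bfam y) \<alpha> \<chi>)"
    proof (cases "\<chi> \<in> bits n")
      case False
      then show ?thesis by (simp add: mat_apply_def tensor_vec_def)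
    next
      case True
      have "mat_apply n (phi n y) v \<chi> = (\<Sum>\<gamma>\<in>bits n. phi n y (\<chi>, \<gamma>) * (\<Sum>\<psi>\<in>?B. c \<psi> * ?W (\<gamma>, \<psi>)))"
        using True unfolding mat_apply_def vW by simp
      also have "\<dots> = (\<Sum>\<psi>\<in>?B. c \<psi> * (\<Sum>\<gamma>\<in>bits n. phi n y (\<chi>, \<gamma>) * ?W (\<gamma>, \<psi>)))"
        by (simp add: sum_distrib_left sum_distrib_right sum.swap[of _ "bits n"] algebra_simps)
      also have "\<dots> = (\<Sum>\<psi>\<in>?B. c \<psi> * mmul n (phi n y) ?W (\<chi>, \<psi>))"
        using True by (intro sum.cong refl) (simp add: mmul_apply)
      also have "\<dots> = (\<Sum>\<psi>\<in>?B. c \<psi> * mmul n ?W ?M (\<chi>, \<psi>))"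
        by (simp add: phi_WmM)
      also have "\<dots> = (\<Sum>\<psi>\<in>?B. c \<psi> * (\<Sum>\<alpha>\<in>bits n. ?W (\<chi>, \<alpha>) * ?M (\<alpha>, \<psi>)))"
        using True by (intro sum.cong refl) (simp add: mmul_apply)
      also have "\<dots> = (\<Sum>\<alpha>\<in>bits n. c' \<alpha> * ?W (\<chi>, \<alpha>))"
        unfolding c'_def by (simp add: sum_distrib_left sum_distrib_right sum.swap[of _ ?B] algebra_simps)
      also have "\<dots> = (\<Sum>\<alpha>\<in>?B. c' \<alpha> * ?W (\<chi>, \<alpha>))"
      proof (rule sum.mono_neutral_right[OF finite_bits])
        show "?B \<subseteq> bits n" by auto
        show "\<forall>\<alpha>\<in>bits n - ?B. c' \<alpha> * ?W (\<chi>, \<alpha>) = 0"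
        proof
          fix \<alpha> assume "\<alpha> \<in> bits n - ?B"
          then have "parity n \<alpha> \<noteq> p" by auto
          then have "c' \<alpha> = 0" unfolding c'_def by (intro sum.neutral) (auto simp: Mof_block)
          then show "c' \<alpha> * ?W (\<chi>, \<alpha>) = 0" by simp
        qed
      qed
      also have "\<dots> = (\<Sum>\<alpha>\<in>?B. c' \<alpha> * tensor_vec n (bfam y) \<alpha> \<chi>)"
        by (intro sum.cong refl) (simp add: tensor_vec_bfam)
      finally show ?thesis .
    qed
  qed
  then show ?thesis unfolding parity_span_def by blast
qed

lemma phi_xstate: "phi n y \<in> x_states n"
proof -
  have "phi n y \<in> trace_one_space n"
    unfolding trace_one_space_def using phi_aspace trace_phi unfolding trace_def by simp
  moreover have "\<forall>p. \<forall>v\<in>parity_span n (bfam y) p. mat_apply n (phi n y) v \<in> parity_span n (bfam y) p"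
    using phi_preserves by blast
  ultimately show ?thesis unfolding x_states_def using bfam_basis by blast
qed



definition flip :: "(nat \<Rightarrow> bool) \<Rightarrow> (nat \<Rightarrow> bool) \<Rightarrow> (nat \<Rightarrow> bool)" where
  "flip \<sigma> \<psi> = (\<lambda>i. \<psi> i \<noteq> \<sigma> i)"

lemma flip_flip: "flip \<sigma> (flip \<sigma> \<psi>) = \<psi>"
  unfolding flip_def by auto

lemma flip_bits: "\<sigma> \<in> bits n \<Longrightarrow> \<psi> \<in> bits n \<Longrightarrow> flip \<sigma> \<psi> \<in> bits n"
  unfolding flip_def bits_def by auto

lemma card_symdiff_parity:
  fixes A S :: "nat set"
  assumes "finite A" "finite S"
  shows "even (card {i. (i \<in> A) \<noteq> (i \<in> S)}) \<longleftrightarrow> (even (card A) \<longleftrightarrow> even (card S))"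
proof -
  have e: "{i. (i \<in> A) \<noteq> (i \<in> S)} = (A - S) \<union> (S - A)" by auto
  have c1: "card {i. (i \<in> A) \<noteq> (i \<in> S)} = card (A - S) + card (S - A)"
    unfolding e using assms by (intro card_Un_disjoint) auto
  have "card ((A - S) \<union> (A \<inter> S)) = card (A - S) + card (A \<inter> S)"
    using assms by (intro card_Un_disjoint) auto
  moreover have "(A - S) \<union> (A \<inter> S) = A" by blast
  ultimately have c2: "card A = card (A - S) + card (A \<inter> S)" by simp
  have "card ((S - A) \<union> (A \<inter> S)) = card (S - A) + card (A \<inter> S)"
    using assms by (intro card_Un_disjoint) auto
  moreover have "(S - A) \<union> (A \<inter> S) = S" by blast
  ultimately have c3: "card S = card (S - A) + card (A \<inter> S)" by simp
  show ?thesis unfolding c1 using c2 c3 by presburger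
qed

lemma parity_flip: "parity n (flip \<sigma> \<psi>) = (parity n \<psi> = parity n \<sigma>)"
proof -
  have eq: "{i. i < n \<and> flip \<sigma> \<psi> i} = {i. (i \<in> {i. i < n \<and> \<psi> i}) \<noteq> (i \<in> {i. i < n \<and> \<sigma> i})}"
    unfolding flip_def by auto
  show ?thesis unfolding parity_def eq
    by (rule card_symdiff_parity) auto
qed

lemma bij_flip:
  assumes "\<sigma> \<in> bits n"
  shows "bij_betw (flip \<sigma>) {\<psi> \<in> bits n. parity n \<psi> = p} {\<gamma> \<in> bits n. parity n \<gamma> = (p = parity n \<sigma>)}"
proof (rule bij_betwI[where g = "flip \<sigma>"])
  show "flip \<sigma> \<in> {\<psi> \<in> bits n. parity n \<psi> = p} \<rightarrow> {\<gamma> \<in> bits n. parity n \<gamma> = (p = parity n \<sigma>)}"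
    using assms by (auto simp: flip_bits parity_flip)
  show "flip \<sigma> \<in> {\<gamma> \<in> bits n. parity n \<gamma> = (p = parity n \<sigma>)} \<rightarrow> {\<psi> \<in> bits n. parity n \<psi> = p}"
    using assms by (auto simp: flip_bits parity_flip)
qed (auto simp: flip_flip)

definition swapb :: "(nat \<Rightarrow> bool) \<Rightarrow> (nat \<Rightarrow> bool \<Rightarrow> bool \<Rightarrow> complex) \<Rightarrow> (nat \<Rightarrow> bool \<Rightarrow> bool \<Rightarrow> complex)" where
  "swapb \<sigma> b = (\<lambda>i a c. b i (a \<noteq> \<sigma> i) c)"

lemma tensor_vec_swapb: "tensor_vec n (swapb \<sigma> b) \<psi> = tensor_vec n b (flip \<sigma> \<psi>)"
  unfolding tensor_vec_def swapb_def flip_def by simp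

lemma parity_span_swapb:
  assumes "\<sigma> \<in> bits n"
  shows "parity_span n (swapb \<sigma> b) p = parity_span n b (p = parity n \<sigma>)"
proof -
  let ?B1 = "{\<psi> \<in> bits n. parity n \<psi> = p}" and ?B2 = "{\<gamma> \<in> bits n. parity n \<gamma> = (p = parity n \<sigma>)}"
  have bij: "bij_betw (flip \<sigma>) ?B1 ?B2" by (rule bij_flip[OF assms])
  have key: "(\<lambda>\<chi>. \<Sum>\<psi>\<in>?B1. c \<psi> * tensor_vec n b (flip \<sigma> \<psi>) \<chi>) = (\<lambda>\<chi>. \<Sum>\<gamma>\<in>?B2. c (flip \<sigma> \<gamma>) * tensor_vec n b \<gamma> \<chi>)" for c
  proof (rule ext)
    fix \<chi>
    show "(\<Sum>\<psi>\<in>?B1. c \<psi> * tensor_vec n b (flip \<sigma> \<psi>) \<chi>) = (\<Sum>\<gamma>\<in>?B2. c (flip \<sigma> \<gamma>) * tensor_vec n b \<gamma> \<chi>)"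
      using sum.reindex_bij_betw[OF bij, of "\<lambda>\<gamma>. c (flip \<sigma> \<gamma>) * tensor_vec n b \<gamma> \<chi>"] by (simp add: flip_flip)
  qed
  show ?thesis
  proof (intro equalityI subsetI)
    fix v assume "v \<in> parity_span n (swapb \<sigma> b) p"
    then obtain c where "v = (\<lambda>\<chi>. \<Sum>\<psi>\<in>?B1. c \<psi> * tensor_vec n (swapb \<sigma> b) \<psi> \<chi>)"
      unfolding parity_span_def by blast
    then have "v = (\<lambda>\<chi>. \<Sum>\<gamma>\<in>?B2. c (flip \<sigma> \<gamma>) * tensor_vec n b \<gamma> \<chi>)"
      unfolding tensor_vec_swapb key by simp
    then show "v \<in> parity_span n b (p = parity n \<sigma>)" unfolding parity_span_def mem_Collect_eq
      by (rule exI[of _ "\<lambda>\<gamma>. c (flip \<sigma> \<gamma>)"])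
  next
    fix v assume "v \<in> parity_span n b (p = parity n \<sigma>)"
    then obtain c where "v = (\<lambda>\<chi>. \<Sum>\<gamma>\<in>?B2. c \<gamma> * tensor_vec n b \<gamma> \<chi>)"
      unfolding parity_span_def by blast
    then have "v = (\<lambda>\<chi>. \<Sum>\<psi>\<in>?B1. c (flip \<sigma> \<psi>) * tensor_vec n (swapb \<sigma> b) \<psi> \<chi>)"
      unfolding tensor_vec_swapb key flip_flip by simp
    then show "v \<in> parity_span n (swapb \<sigma> b) p" unfolding parity_span_def mem_Collect_eq
      by (rule exI[of _ "\<lambda>\<gamma>. c (flip \<sigma> \<gamma>)"])
  qed
qed

lemma swap_normalize:
  assumes b: "is_basis_family n b"
    and pres: "\<forall>p. \<forall>v\<in>parity_span n b p. mat_apply n \<rho> v \<in> parity_span n b p"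
  shows "\<exists>b'. is_basis_family n b' \<and> (\<forall>i<n. b' i False False \<noteq> 0) \<and>
           (\<forall>p. \<forall>v\<in>parity_span n b' p. mat_apply n \<rho> v \<in> parity_span n b' p)"
proof -
  define \<sigma> where "\<sigma> = (\<lambda>i. i < n \<and> b i False False = 0)"
  have \<sigma>: "\<sigma> \<in> bits n" unfolding \<sigma>_def bits_def by auto
  let ?b' = "swapb \<sigma> b"
  have det: "\<And>i. i < n \<Longrightarrow> b i False False * b i True True - b i False True * b i True False \<noteq> 0"
    using b unfolding is_basis_family_def by blast
  have "is_basis_family n ?b'"
    unfolding is_basis_family_def
  proof (intro allI impI)
    fix i assume i: "i < n"
    show "?b' i False False * ?b' i True True - ?b' i False True * ?b' i True False \<noteq> 0"
    proof (cases "\<sigma> i")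
      case True
      have "?b' i False False * ?b' i True True - ?b' i False True * ?b' i True False
          = - (b i False False * b i True True - b i False True * b i True False)"
        using True by (simp add: swapb_def algebra_simps)
      then show ?thesis using det[OF i] by simp
    next
      case False
      then show ?thesis using det[OF i] by (simp add: swapb_def)
    qed
  qed
  moreover have "\<forall>i<n. ?b' i False False \<noteq> 0"
  proof (intro allI impI)
    fix i assume i: "i < n"
    show "?b' i False False \<noteq> 0"
    proof (cases "\<sigma> i")
      case True
      then have "b i False False = 0" unfolding \<sigma>_def by simp
      then have "b i True False \<noteq> 0" using det[OF i] by auto
      then show ?thesis using True by (simp add: swapb_def)
    next
      case False
      then show ?thesis using i by (simp add: swapb_def \<sigma>_def)
    qed
  qed
  moreover have "\<forall>p. \<forall>v\<in>parity_span n ?b' p. mat_apply n \<rho> v \<in> parity_span n ?b' p"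
    unfolding parity_span_swapb[OF \<sigma>] using pres by blast
  ultimately show ?thesis by blast
qed



lemma zero_out_aspace: "\<rho> \<in> aspace (bits n \<times> bits n) \<Longrightarrow> zero_out n \<rho>"
  unfolding zero_out_def aspace_def by auto

lemma xstate_in_image:
  assumes \<rho>: "\<rho> \<in> x_states n"
  shows "\<exists>y\<in>aspace (Pset n). \<rho> = phi n y"
proof -
  have \<rho>a: "\<rho> \<in> aspace (bits n \<times> bits n)" and tr: "trace n \<rho> = 1"
    using \<rho> unfolding x_states_def trace_one_space_def trace_def by auto
  obtain b0 where b0: "is_basis_family n b0" "\<forall>p. \<forall>v\<in>parity_span n b0 p. mat_apply n \<rho> v \<in> parity_span n b0 p"
    using \<rho> unfolding x_states_def by blast
  obtain b where bb: "is_basis_family n b" and bF: "\<forall>i<n. b i False False \<noteq> 0"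
    and pres: "\<forall>p. \<forall>v\<in>parity_span n b p. mat_apply n \<rho> v \<in> parity_span n b p"
    using swap_normalize[OF b0] by blast
  define t0 where "t0 i = b i False True / b i False False" for i
  define dT where "dT i = b i True True - t0 i * b i True False" for i
  define s0 where "s0 i = b i True False / dT i" for i
  define dd where "dd i a = (if a then dT i else b i False False)" for i a
  define y0 :: "par \<Rightarrow> complex" where
    "y0 q = (case q of Inl _ \<Rightarrow> 0 | Inr (i, a) \<Rightarrow> if i < n then (if a then t0 i else s0 i) else 0)" for q
  have dT0: "dT i \<noteq> 0" if i: "i < n" for i
  proof -
    have "dT i = (b i False False * b i True True - b i False True * b i True False) / b i False False"
      using bF i unfolding dT_def t0_def by (simp add: field_simps)
    then show ?thesis using bb i bF unfolding is_basis_family_def by simp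
  qed
  have dec: "b i a c = Cm (s0 i) (t0 i) c a * dd i a" if i: "i < n" for i a c
    using bF i dT0[OF i]
    by (cases a; cases c) (simp_all add: Cm_def dd_def s0_def t0_def dT_def field_simps)
  have y0F: "y0 (Inr (i, False)) = s0 i" "y0 (Inr (i, True)) = t0 i" if "i < n" for i
    using that by (simp_all add: y0_def)
  define \<delta> where "\<delta> \<psi> = (\<Prod>i<n. dd i (\<psi> i))" for \<psi>
  have \<delta>0: "\<delta> \<psi> \<noteq> 0" for \<psi>
    unfolding \<delta>_def using bF dT0 by (auto simp: dd_def)
  let ?W = "Wm n y0" and ?Wi = "Wi n y0"
  have tv: "tensor_vec n b \<psi> \<chi> = ?W (\<chi>, \<psi>) * \<delta> \<psi>" if \<psi>: "\<psi> \<in> bits n" for \<psi> \<chi>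
  proof (cases "\<chi> \<in> bits n")
    case True
    have "tensor_vec n b \<psi> \<chi> = (\<Prod>i<n. Cm (s0 i) (t0 i) (\<chi> i) (\<psi> i) * dd i (\<psi> i))"
      using True by (simp add: tensor_vec_def dec)
    also have "\<dots> = ?W (\<chi>, \<psi>) * \<delta> \<psi>"
      using True \<psi> by (simp add: Wm_def tens_apply \<delta>_def prod.distrib y0F)
    finally show ?thesis .
  next
    case False then show ?thesis by (simp add: tensor_vec_def Wm_def tens_out)
  qed
  define M where "M = mmul n ?Wi (mmul n \<rho> ?W)"
  have block: "M (\<alpha>, \<beta>) = 0" if \<alpha>: "\<alpha> \<in> bits n" and \<beta>: "\<beta> \<in> bits n" and par: "parity n \<alpha> \<noteq> parity n \<beta>" for \<alpha> \<beta>
  proof -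
    let ?B = "{\<gamma> \<in> bits n. parity n \<gamma> = parity n \<beta>}"
    have "tensor_vec n b \<beta> \<in> parity_span n b (parity n \<beta>)"
    proof -
      have "tensor_vec n b \<beta> = (\<lambda>\<chi>. \<Sum>\<psi>\<in>?B. (if \<psi> = \<beta> then 1 else 0) * tensor_vec n b \<psi> \<chi>)"
      proof (rule ext)
        fix \<chi>
        have "(\<Sum>\<psi>\<in>?B. (if \<psi> = \<beta> then 1 else 0) * tensor_vec n b \<psi> \<chi>) = (\<Sum>\<psi>\<in>?B. if \<psi> = \<beta> then tensor_vec n b \<beta> \<chi> else 0)"
          by (intro sum.cong refl) auto
        also have "\<dots> = tensor_vec n b \<beta> \<chi>" using \<beta> finite_bits by (simp add: sum.delta)
        finally show "tensor_vec n b \<beta> \<chi> = (\<Sum>\<psi>\<in>?B. (if \<psi> = \<beta> then 1 else 0) * tensor_vec n b \<psi> \<chi>)" by simp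
      qed
      then show ?thesis unfolding parity_span_def mem_Collect_eq
        by (rule exI[of _ "\<lambda>\<psi>. if \<psi> = \<beta> then 1 else 0"])
    qed
    then have "mat_apply n \<rho> (tensor_vec n b \<beta>) \<in> parity_span n b (parity n \<beta>)" using pres by blast
    then obtain e where e: "mat_apply n \<rho> (tensor_vec n b \<beta>) = (\<lambda>\<chi>. \<Sum>\<gamma>\<in>?B. e \<gamma> * tensor_vec n b \<gamma> \<chi>)"
      unfolding parity_span_def by blast
    define f where "f \<gamma> = e \<gamma> * \<delta> \<gamma> / \<delta> \<beta>" for \<gamma>
    have rW: "mmul n \<rho> ?W (\<chi>, \<beta>) = (\<Sum>\<gamma>\<in>?B. f \<gamma> * ?W (\<chi>, \<gamma>))" if \<chi>: "\<chi> \<in> bits n" for \<chi>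
    proof -
      have "mmul n \<rho> ?W (\<chi>, \<beta>) = (\<Sum>\<gamma>\<in>bits n. \<rho> (\<chi>, \<gamma>) * (tensor_vec n b \<beta> \<gamma> / \<delta> \<beta>))"
        using \<chi> \<beta> \<delta>0 by (simp add: mmul_apply tv)
      also have "\<dots> = mat_apply n \<rho> (tensor_vec n b \<beta>) \<chi> / \<delta> \<beta>"
        using \<chi> by (simp add: mat_apply_def sum_divide_distrib)
      also have "\<dots> = (\<Sum>\<gamma>\<in>?B. e \<gamma> * tensor_vec n b \<gamma> \<chi>) / \<delta> \<beta>" by (simp add: e)
      also have "\<dots> = (\<Sum>\<gamma>\<in>?B. f \<gamma> * ?W (\<chi>, \<gamma>))"
        unfolding sum_divide_distrib by (intro sum.cong refl) (simp add: tv f_def)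
      finally show ?thesis .
    qed
    have "M (\<alpha>, \<beta>) = (\<Sum>\<chi>\<in>bits n. ?Wi (\<alpha>, \<chi>) * (\<Sum>\<gamma>\<in>?B. f \<gamma> * ?W (\<chi>, \<gamma>)))"
      unfolding M_def mmul_apply[OF \<alpha> \<beta>] by (intro sum.cong refl) (simp add: rW)
    also have "\<dots> = (\<Sum>\<gamma>\<in>?B. f \<gamma> * (\<Sum>\<chi>\<in>bits n. ?Wi (\<alpha>, \<chi>) * ?W (\<chi>, \<gamma>)))"
      by (simp add: sum_distrib_left sum.swap[of _ "bits n"] algebra_simps)
    also have "\<dots> = (\<Sum>\<gamma>\<in>?B. f \<gamma> * idm n (\<alpha>, \<gamma>))"
      using \<alpha> by (intro sum.cong refl) (simp add: mmul_apply[symmetric] Wi_Wm)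
    also have "\<dots> = 0"
      using par by (intro sum.neutral) (auto simp: idm_def)
    finally show ?thesis .
  qed
  have zr: "zero_out n \<rho>" by (rule zero_out_aspace[OF \<rho>a])
  have recon: "mmul n (mmul n ?W M) ?Wi = \<rho>"
  proof -
    have "mmul n (mmul n ?W M) ?Wi = mmul n (mmul n (mmul n ?W ?Wi) (mmul n \<rho> ?W)) ?Wi"
      unfolding M_def by (simp add: mmul_assoc)
    also have "\<dots> = mmul n (mmul n \<rho> ?W) ?Wi"
      by (simp add: Wm_Wi mmul_idm_left zero_out_mmul)
    also have "\<dots> = \<rho>" by (simp add: mmul_assoc Wm_Wi mmul_idm_right zr)
    finally show ?thesis .
  qed
  have trM: "trace n M = 1"
  proof -
    have "trace n M = trace n (mmul n (mmul n \<rho> ?W) ?Wi)" unfolding M_def by (rule trace_mmul_comm)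
    also have "\<dots> = trace n \<rho>" by (simp add: mmul_assoc Wm_Wi mmul_idm_right zr)
    finally show ?thesis using tr by simp
  qed
  define y :: "par \<Rightarrow> complex" where
    "y q = (case q of Inl v \<Rightarrow> if v \<in> Mset n then M v else 0 | Inr r \<Rightarrow> y0 (Inr r))" for q
  have ya: "y \<in> aspace (Pset n)"
    unfolding aspace_def
  proof (intro CollectI allI impI)
    fix q assume q: "q \<notin> Pset n"
    show "y q = 0"
    proof (cases q)
      case (Inl v) then show ?thesis using q by (auto simp: y_def Pset_def)
    next
      case (Inr r)
      obtain i a where r: "r = (i, a)" by (cases r)
      then have "\<not> i < n" using q Inr by (auto simp: Pset_def)
      then show ?thesis using Inr r by (simp add: y_def y0_def)
    qed
  qed
  have Wy: "Wm n y = ?W" "Wi n y = ?Wi" unfolding Wm_def Wi_def y_def by simp_all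
  have zM: "zero_out n M" unfolding M_def by (rule zero_out_mmul)
  have My: "Mof n y = M"
  proof (rule ext, clarify)
    fix \<chi> \<psi>
    show "Mof n y (\<chi>, \<psi>) = M (\<chi>, \<psi>)"
    proof (cases "\<chi> \<in> bits n \<and> \<psi> \<in> bits n")
      case False
      then show ?thesis using zM unfolding zero_out_def by (auto simp: Mof_def)
    next
      case True
      show ?thesis
      proof (cases "parity n \<chi> = parity n \<psi>")
        case False
        then show ?thesis using True block by (simp add: Mof_def)
      next
        case par: True
        show ?thesis
        proof (cases "\<chi> = zb \<and> \<psi> = zb")
          case False
          then have "(\<chi>, \<psi>) \<in> Mset n" using True par by (auto simp: Mset_def)
          then show ?thesis using True par False unfolding Mof_def y_def by auto
        next
          case z: True
          have "(\<Sum>\<chi>'\<in>bits n - {zb}. y (Inl (\<chi>', \<chi>'))) = (\<Sum>\<chi>'\<in>bits n - {zb}. M (\<chi>', \<chi>'))"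
            by (intro sum.cong refl) (auto simp: y_def Mset_def)
          moreover have "trace n M = M (zb, zb) + (\<Sum>\<chi>'\<in>bits n - {zb}. M (\<chi>', \<chi>'))"
            unfolding trace_def using sum.remove[OF finite_bits zb_bits, of "\<lambda>\<chi>. M (\<chi>, \<chi>)"] by simp
          ultimately have "Mof n y (\<chi>, \<psi>) = 1 - (\<Sum>\<chi>'\<in>bits n - {zb}. M (\<chi>', \<chi>'))"
            "M (zb, zb) + (\<Sum>\<chi>'\<in>bits n - {zb}. M (\<chi>', \<chi>')) = 1"
            using z trM zb_bits[of n] by (simp_all add: Mof_def)
          then have "Mof n y (\<chi>, \<psi>) = M (zb, zb)" by (metis add_diff_cancel_right')
          then show ?thesis using z by simp
        qed
      qed
    qed
  qed
  have "phi n y = \<rho>" unfolding phi_def Wy My by (rule recon)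
  then show ?thesis using ya by blast
qed



lemma m2mul_Id2_right: "m2mul A Id2 = A"
  by (intro ext) (simp add: m2mul_def Id2_def)

lemma m2mul_Id2_left: "m2mul Id2 A = A"
  by (intro ext) (simp add: m2mul_def Id2_def)

lemma Cm00: "Cm 0 0 = Id2" by (intro ext) (simp add: Cm_def Id2_def)
lemma Ci00: "Ci 0 0 = Id2" by (intro ext) (simp add: Ci_def Id2_def)

definition Gq :: "nat \<Rightarrow> m2 \<Rightarrow> nat \<Rightarrow> m2" where
  "Gq i0 G0 = (\<lambda>i. if i = i0 then G0 else Id2)"

definition Fq :: "(par \<Rightarrow> complex) \<Rightarrow> nat \<Rightarrow> m2 \<Rightarrow> nat \<Rightarrow> m2" where
  "Fq y i0 G0 = (\<lambda>i. m2mul (m2mul (Ci (y (Inr (i, False))) (y (Inr (i, True)))) (Gq i0 G0 i))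
                      (Cm (y (Inr (i, False))) (y (Inr (i, True)))))"

definition gfun :: "nat \<Rightarrow> nat \<Rightarrow> m2 \<Rightarrow> mat \<Rightarrow> complex" where
  "gfun n i0 G0 \<rho> = trace n (mmul n \<rho> (tens n (Gq i0 G0)))"

lemma polyfun_gfun: "polyfun (bits n \<times> bits n) (gfun n i0 G0)"
proof -
  have "gfun n i0 G0 = (\<lambda>\<rho>. \<Sum>\<chi>\<in>bits n. \<Sum>\<gamma>\<in>bits n. \<rho> (\<chi>, \<gamma>) * tens n (Gq i0 G0) (\<gamma>, \<chi>))"
    unfolding gfun_def trace_def by (intro ext sum.cong refl) (simp add: mmul_apply)
  moreover have "polyfun (bits n \<times> bits n) (\<lambda>\<rho>. \<Sum>\<chi>\<in>bits n. \<Sum>\<gamma>\<in>bits n. \<rho> (\<chi>, \<gamma>) * tens n (Gq i0 G0) (\<gamma>, \<chi>))"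
  proof (intro polyfun_sum)
    fix \<chi> \<gamma> assume "\<chi> \<in> bits n" "\<gamma> \<in> bits n"
    then show "polyfun (bits n \<times> bits n) (\<lambda>\<rho>. \<rho> (\<chi>, \<gamma>) * tens n (Gq i0 G0) (\<gamma>, \<chi>))"
      by (intro polyfun.pmult polyfun.pvar polyfun.pconst) simp
  qed
  ultimately show ?thesis by simp
qed

lemma gfun_phi:
  "gfun n i0 G0 (phi n y) = (\<Sum>\<alpha>\<in>bits n. \<Sum>\<beta>\<in>bits n. Mof n y (\<alpha>, \<beta>) * tens n (Fq y i0 G0) (\<beta>, \<alpha>))"
proof -
  let ?W = "Wm n y" and ?Wi = "Wi n y" and ?M = "Mof n y" and ?T = "tens n (Gq i0 G0)"
  have "gfun n i0 G0 (phi n y) = trace n (mmul n (mmul n ?W ?M) (mmul n ?Wi ?T))"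
    unfolding gfun_def phi_def by (simp add: mmul_assoc)
  also have "\<dots> = trace n (mmul n (mmul n ?Wi ?T) (mmul n ?W ?M))" by (rule trace_mmul_comm)
  also have "\<dots> = trace n (mmul n (mmul n (mmul n ?Wi ?T) ?W) ?M)" by (simp add: mmul_assoc)
  also have "\<dots> = trace n (mmul n ?M (mmul n (mmul n ?Wi ?T) ?W))" by (rule trace_mmul_comm)
  also have "mmul n (mmul n ?Wi ?T) ?W = tens n (Fq y i0 G0)"
    unfolding Wi_def Wm_def tens_mult Fq_def ..
  finally have X: "gfun n i0 G0 (phi n y) = trace n (mmul n ?M (tens n (Fq y i0 G0)))" .
  show ?thesis unfolding X trace_def by (intro sum.cong refl) (simp add: mmul_apply)
qed

lemma parity_one_diff:
  assumes \<alpha>: "\<alpha> \<in> bits n" and \<beta>: "\<beta> \<in> bits n" and i0: "i0 < n"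
    and same: "\<forall>i<n. i \<noteq> i0 \<longrightarrow> \<alpha> i = \<beta> i" and d: "\<alpha> i0 \<noteq> \<beta> i0"
  shows "parity n \<alpha> \<noteq> parity n \<beta>"
proof -
  define \<sigma> where "\<sigma> = (\<lambda>i. i = i0)"
  have "\<beta> = flip \<sigma> \<alpha>"
  proof
    fix i show "\<beta> i = flip \<sigma> \<alpha> i"
    proof (cases "i < n")
      case True then show ?thesis using same d by (cases "i = i0") (auto simp: flip_def \<sigma>_def)
    next
      case False then show ?thesis using \<alpha> \<beta> i0 by (auto simp: flip_def \<sigma>_def bits_def)
    qed
  qed
  moreover have "\<not> parity n \<sigma>"
  proof -
    have "{i. i < n \<and> \<sigma> i} = {i0}" using i0 by (auto simp: \<sigma>_def)
    then show ?thesis by (simp add: parity_def)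
  qed
  ultimately show ?thesis by (simp add: parity_flip)
qed

lemma gfun_vanish:
  assumes i0: "i0 < n"
    and diag: "\<And>i a c. i < n \<Longrightarrow> i \<noteq> i0 \<Longrightarrow> a \<noteq> c \<Longrightarrow> Fq y i0 G0 i a c = 0"
    and off: "\<And>a. Fq y i0 G0 i0 a a = 0"
  shows "gfun n i0 G0 (phi n y) = 0"
  unfolding gfun_phi
proof (intro sum.neutral ballI)
  fix \<alpha> \<beta> assume \<alpha>: "\<alpha> \<in> bits n" and \<beta>: "\<beta> \<in> bits n"
  show "Mof n y (\<alpha>, \<beta>) * tens n (Fq y i0 G0) (\<beta>, \<alpha>) = 0"
  proof (cases "parity n \<alpha> = parity n \<beta>")
    case False then show ?thesis by (simp add: Mof_block)
  next
    case True
    have "(\<Prod>i<n. Fq y i0 G0 i (\<beta> i) (\<alpha> i)) = 0"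
    proof (cases "\<alpha> i0 = \<beta> i0")
      case True
      then show ?thesis using off i0 by (intro prod_zero) (auto intro!: bexI[of _ i0])
    next
      case False
      then have "\<not> (\<forall>i<n. i \<noteq> i0 \<longrightarrow> \<alpha> i = \<beta> i)"
        using parity_one_diff[OF \<alpha> \<beta> i0] \<open>parity n \<alpha> = parity n \<beta>\<close> by blast
      then obtain i where i: "i < n" "i \<noteq> i0" "\<alpha> i \<noteq> \<beta> i" by blast
      then have "Fq y i0 G0 i (\<beta> i) (\<alpha> i) = 0" by (intro diag) auto
      then show ?thesis using i by (intro prod_zero) (auto intro!: bexI[of _ i])
    qed
    then show ?thesis using \<alpha> \<beta> by (simp add: tens_apply)
  qed
qed

lemma Mof_basic:
  assumes "\<And>v. y (Inl v) = 0"
  shows "Mof n y (\<alpha>, \<beta>) = (if \<alpha> = zb \<and> \<beta> = zb then 1 else 0)"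
  using assms zb_bits[of n] by (auto simp: Mof_def)

lemma gfun_witness:
  assumes i0: "i0 < n" and yl: "\<And>v. y (Inl v) = 0"
    and yr: "\<And>i b. i \<noteq> i0 \<Longrightarrow> y (Inr (i, b)) = 0"
  shows "gfun n i0 G0 (phi n y) = Fq y i0 G0 i0 False False"
proof -
  have "gfun n i0 G0 (phi n y) = (\<Sum>\<alpha>\<in>bits n. \<Sum>\<beta>\<in>bits n. (if \<alpha> = zb \<and> \<beta> = zb then tens n (Fq y i0 G0) (zb, zb) else 0))"
    unfolding gfun_phi Mof_basic[where y=y and n=n, OF yl] by (intro sum.cong refl) auto
  also have "\<dots> = (\<Sum>\<alpha>\<in>bits n. if \<alpha> = zb then tens n (Fq y i0 G0) (zb, zb) else 0)"
  proof (intro sum.cong refl)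
    fix \<alpha> assume "\<alpha> \<in> bits n"
    show "(\<Sum>\<beta>\<in>bits n. (if \<alpha> = zb \<and> \<beta> = zb then tens n (Fq y i0 G0) (zb, zb) else 0)) = (if \<alpha> = zb then tens n (Fq y i0 G0) (zb, zb) else 0)"
      using zb_bits[of n] finite_bits[of n] by (cases "\<alpha> = zb") (simp_all add: sum.delta)
  qed
  also have "\<dots> = tens n (Fq y i0 G0) (zb, zb)" using zb_bits[of n] finite_bits[of n] by (simp add: sum.delta)
  also have "\<dots> = (\<Prod>i<n. Fq y i0 G0 i False False)" using zb_bits[of n] by (simp add: tens_apply zb_def)
  also have "\<dots> = (\<Prod>i<n. if i = i0 then Fq y i0 G0 i0 False False else 1)"
  proof (intro prod.cong refl)
    fix i assume "i \<in> {..<n}"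
    show "Fq y i0 G0 i False False = (if i = i0 then Fq y i0 G0 i0 False False else 1)"
    proof (cases "i = i0")
      case False
      then show ?thesis using yr[OF False]
        by (simp add: Fq_def Gq_def Cm00 Ci00 m2mul_Id2_right) (simp add: Id2_def)
    qed simp
  qed
  also have "\<dots> = Fq y i0 G0 i0 False False" using i0 by (simp add: prod.delta)
  finally show ?thesis .
qed

definition E10 :: m2 where "E10 = (\<lambda>a c. if a \<and> \<not> c then 1 else 0)"
definition E01 :: m2 where "E01 = (\<lambda>a c. if \<not> a \<and> c then 1 else 0)"

lemma Fq_diag_other:
  "i \<noteq> i0 \<Longrightarrow> a \<noteq> c \<Longrightarrow> Fq y i0 G0 i a c = 0"
  by (simp add: Fq_def Gq_def m2mul_Id2_right Ci_Cm) (simp add: Id2_def)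

lemma Fq_s_stage:
  assumes "y (Inr (i0, False)) = 0" "y (Inr (i0, True)) = 0"
  shows "Fq y i0 E10 i0 a a = 0"
  using assms by (cases a) (simp_all add: Fq_def Gq_def Cm00 Ci00 m2mul_Id2_right m2mul_Id2_left E10_def)

lemma Fq_t_stage:
  assumes "y (Inr (i0, True)) = 0"
  shows "Fq y i0 E01 i0 a a = 0"
  using assms by (cases a) (simp_all add: Fq_def Gq_def m2mul_def Cm_def Ci_def E01_def)

lemma Fq_s_witness:
  assumes "y (Inr (i0, False)) = 1" "y (Inr (i0, True)) = 0"
  shows "Fq y i0 E10 i0 False False = -1"
  using assms by (simp add: Fq_def Gq_def m2mul_def Cm_def Ci_def E10_def)

lemma Fq_t_witness:
  assumes "y (Inr (i0, False)) = 0" "y (Inr (i0, True)) = 1"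
  shows "Fq y i0 E01 i0 False False = 1"
  using assms by (simp add: Fq_def Gq_def m2mul_def Cm_def Ci_def E01_def)

lemma phi_noInr:
  assumes "\<And>q. y (Inr q) = 0"
  shows "phi n y = Mof n y"
proof -
  have "Wm n y = idm n" "Wi n y = idm n"
    unfolding Wm_def Wi_def using assms by (simp_all add: Cm00 Ci00 tens_Id2)
  then show ?thesis unfolding phi_def
    by (simp add: mmul_idm_left mmul_idm_right zero_out_Mof zero_out_mmul)
qed



lemma card_parity_class:
  assumes n: "1 \<le> n"
  shows "card {\<chi> \<in> bits n. parity n \<chi> = p} = 2 ^ (n - 1)"
proof -
  define \<sigma> where "\<sigma> = (\<lambda>i. i = (0::nat))"
  have \<sigma>: "\<sigma> \<in> bits n" using n by (auto simp: \<sigma>_def bits_def)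
  have np: "\<not> parity n \<sigma>"
  proof -
    have "{i. i < n \<and> \<sigma> i} = {0}" using n by (auto simp: \<sigma>_def)
    then show ?thesis by (simp add: parity_def)
  qed
  let ?A = "\<lambda>q. {\<chi> \<in> bits n. parity n \<chi> = q}"
  have "card (?A p) = card (?A (p = parity n \<sigma>))" by (rule bij_betw_same_card[OF bij_flip[OF \<sigma>]])
  then have eqc: "card (?A p) = card (?A (\<not> p))" using np by simp
  have "bits n = ?A p \<union> ?A (\<not> p)" by auto
  moreover have "card (?A p \<union> ?A (\<not> p)) = card (?A p) + card (?A (\<not> p))"
    using finite_bits[of n] by (intro card_Un_disjoint) auto
  ultimately have "2 ^ n = card (?A p) + card (?A (\<not> p))" using card_bits[of n] by simp
  then have "2 ^ n = 2 * card (?A p)" using eqc by simp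
  moreover have "(2::nat) ^ n = 2 * 2 ^ (n - 1)" using n by (metis Suc_diff_le diff_Suc_1 power_Suc)
  ultimately show ?thesis by simp
qed

lemma card_Mset:
  assumes n: "1 \<le> n"
  shows "card (Mset n) = 2 ^ (2 * n - 1) - 1"
proof -
  let ?A = "\<lambda>q. {\<chi> \<in> bits n. parity n \<chi> = q}"
  define SP where "SP = {(\<chi>, \<psi>). \<chi> \<in> bits n \<and> \<psi> \<in> bits n \<and> parity n \<chi> = parity n \<psi>}"
  have SPe: "SP = (?A True \<times> ?A True) \<union> (?A False \<times> ?A False)" unfolding SP_def by auto
  have fA: "finite (?A q)" for q using finite_bits[of n] by simp
  have fA2: "finite (?A q \<times> ?A q')" for q q' using fA by simp
  have "card SP = card (?A True \<times> ?A True) + card (?A False \<times> ?A False)"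
    unfolding SPe using fA2[of True True] fA2[of False False] by (intro card_Un_disjoint) auto
  also have "\<dots> = 2 ^ (n - 1) * 2 ^ (n - 1) + 2 ^ (n - 1) * 2 ^ (n - 1)"
    using card_parity_class[OF n, of True] card_parity_class[OF n, of False] by (simp add: card_cartesian_product)
  also have "\<dots> = 2 ^ (2 * n - 1)"
  proof -
    obtain m where m: "n = Suc m" using n by (cases n) auto
    have "(2::nat) ^ (2 * n - 1) = 2 ^ Suc (m + m)" using m by simp
    also have "\<dots> = 2 ^ m * 2 ^ m + 2 ^ m * 2 ^ m" by (simp add: power_add)
    finally show ?thesis using m by simp
  qed
  finally have cSP: "card SP = 2 ^ (2 * n - 1)" .
  have "Mset n = SP - {(zb, zb)}" unfolding Mset_def SP_def by auto
  moreover have "(zb, zb) \<in> SP" unfolding SP_def using zb_bits by simp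
  moreover have "finite SP" unfolding SPe using fA2[of True True] fA2[of False False] by simp
  ultimately show ?thesis using cSP by (simp add: card_Diff_singleton)
qed

lemma finite_Mset: "finite (Mset n)"
proof -
  have "Mset n \<subseteq> bits n \<times> bits n" unfolding Mset_def by auto
  moreover have "finite (bits n \<times> bits n)" using finite_bits by simp
  ultimately show ?thesis by (rule finite_subset)
qed

lemma finite_Pset: "finite (Pset n)"
  unfolding Pset_def using finite_Mset by simp

lemma card_Pset:
  assumes n: "1 \<le> n"
  shows "card (Pset n) = 2 ^ (2 * n - 1) + 2 * n - 1"
proof -
  have "card (Pset n) = card (Inl ` Mset n :: par set) + card (Inr ` ({..<n} \<times> (UNIV :: bool set)) :: par set)"
    unfolding Pset_def using finite_Mset by (intro card_Un_disjoint) auto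
  also have "card (Inl ` Mset n :: par set) = card (Mset n)" by (rule card_image) simp
  also have "card (Inr ` ({..<n} \<times> (UNIV :: bool set)) :: par set) = card ({..<n} \<times> (UNIV :: bool set))" by (rule card_image) simp
  also have "\<dots> = 2 * n" by (simp add: card_cartesian_product)
  finally show ?thesis using card_Mset[OF n]
    by (simp add: Suc_leI)
qed

lemma aspace_mono: "A \<subseteq> B \<Longrightarrow> aspace A \<subseteq> aspace B"
  unfolding aspace_def by auto

lemma strict_step:
  assumes g: "polyfun (bits n \<times> bits n) g"
    and van: "\<And>y. y \<in> aspace L \<Longrightarrow> g (phi n y) = 0"
    and y1: "y1 \<in> aspace L'" "g (phi n y1) \<noteq> 0" and LL: "L \<subseteq> L'"
  shows "zariski_closure (bits n \<times> bits n) (phi n ` aspace L) \<subset> zariski_closure (bits n \<times> bits n) (phi n ` aspace L')"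
proof
  show "zariski_closure (bits n \<times> bits n) (phi n ` aspace L) \<subseteq> zariski_closure (bits n \<times> bits n) (phi n ` aspace L')"
    by (intro closure_mono image_mono aspace_mono LL)
  have sub: "phi n ` aspace L' \<subseteq> aspace (bits n \<times> bits n)" using phi_aspace by blast
  have sub2: "phi n ` aspace L \<subseteq> aspace (bits n \<times> bits n)" using phi_aspace by blast
  have "phi n y1 \<in> zariski_closure (bits n \<times> bits n) (phi n ` aspace L')"
    using closure_sub[OF sub] y1(1) by blast
  moreover have "phi n y1 \<notin> zariski_closure (bits n \<times> bits n) (phi n ` aspace L)"
  proof
    assume "phi n y1 \<in> zariski_closure (bits n \<times> bits n) (phi n ` aspace L)"
    from closure_vanish[OF g sub2 _ this] van have "g (phi n y1) = 0" by blast
    then show False using y1(2) by simp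
  qed
  ultimately show "zariski_closure (bits n \<times> bits n) (phi n ` aspace L) \<noteq> zariski_closure (bits n \<times> bits n) (phi n ` aspace L')"
    by blast
qed

lemma chain_exists:
  assumes n: "1 \<le> n"
  shows "\<exists>Z. (\<forall>i\<le>card (Pset n). zariski_irreducible (bits n \<times> bits n) (Z i) \<and> Z i \<subseteq> x_variety n)
            \<and> (\<forall>i<card (Pset n). Z i \<subset> Z (Suc i))"
proof -
  define K where "K = card (Mset n)"
  obtain h where h: "bij_betw h {0..<K} (Mset n)"
    unfolding K_def using ex_bij_betw_nat_finite[OF finite_Mset] by blast
  have hM: "j < K \<Longrightarrow> h j \<in> Mset n" for j using h by (auto dest: bij_betwE)
  have hinj: "inj_on h {0..<K}" using h by (rule bij_betw_imp_inj_on)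
  define D where "D = K + 2 * n"
  have DP: "D = card (Pset n)"
  proof -
    have "card (Pset n) = card (Inl ` Mset n :: par set) + card (Inr ` ({..<n} \<times> (UNIV :: bool set)) :: par set)"
      unfolding Pset_def using finite_Mset by (intro card_Un_disjoint) auto
    also have "card (Inl ` Mset n :: par set) = K" unfolding K_def by (rule card_image) simp
    also have "card (Inr ` ({..<n} \<times> (UNIV :: bool set)) :: par set) = card ({..<n} \<times> (UNIV :: bool set))" by (rule card_image) simp
    also have "\<dots> = 2 * n" by (simp add: card_cartesian_product)
    finally show ?thesis unfolding D_def by simp
  qed
  define en :: "nat \<Rightarrow> par" where "en j = (if j < K then Inl (h j) else Inr ((j - K) div 2, odd (j - K)))" for j
  have en_inj: "inj_on en {..<D}"
  proof (rule inj_onI)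
    fix j1 j2 assume j1: "j1 \<in> {..<D}" and j2: "j2 \<in> {..<D}" and e: "en j1 = en j2"
    show "j1 = j2"
    proof (cases "j1 < K")
      case True
      then have "j2 < K" using e by (cases "j2 < K") (auto simp: en_def)
      then show ?thesis using True e hinj by (auto simp: en_def inj_on_def)
    next
      case False
      then have F2: "\<not> j2 < K" using e by (cases "j2 < K") (auto simp: en_def)
      then have "(j1 - K) div 2 = (j2 - K) div 2" "odd (j1 - K) = odd (j2 - K)" using False e by (auto simp: en_def)
      then have "j1 - K = j2 - K" by presburger
      then show ?thesis using False F2 by simp
    qed
  qed
  define L where "L j = en ` {..<j}" for j
  have LP: "L j \<subseteq> Pset n" if "j \<le> D" for j
  proof
    fix q assume "q \<in> L j"
    then obtain j' where j': "j' < j" "q = en j'" unfolding L_def by auto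
    show "q \<in> Pset n"
    proof (cases "j' < K")
      case True then show ?thesis using j' hM by (simp add: en_def Pset_def)
    next
      case False
      then have "(j' - K) div 2 < n" using j' that unfolding D_def by simp
      then show ?thesis using j' False by (simp add: en_def Pset_def)
    qed
  qed
  have later0: "y (en j') = 0" if y: "y \<in> aspace (L j)" and jj: "j \<le> j'" "j' < D" for y j j'
  proof -
    have "en j' \<notin> L j"
    proof
      assume "en j' \<in> L j"
      then obtain j'' where j'': "j'' < j" "en j' = en j''" unfolding L_def by auto
      have "j' \<in> {..<D}" "j'' \<in> {..<D}" using jj j'' by auto
      from inj_onD[OF en_inj j''(2) this] have "j' = j''" .
      then show False using jj j'' by simp
    qed
    then show ?thesis using y unfolding aspace_def by simp
  qed
  have inr0: "y (Inr q) = 0" if y: "y \<in> aspace (L j)" and jK: "j \<le> K" for y j q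
  proof -
    have "Inr q \<notin> L j" unfolding L_def using jK by (auto simp: en_def)
    then show ?thesis using y unfolding aspace_def by simp
  qed
  define Z where "Z j = zariski_closure (bits n \<times> bits n) (phi n ` aspace (L j))" for j
  have irr: "zariski_irreducible (bits n \<times> bits n) (Z i)" for i
    unfolding Z_def by (rule irreducible_image[OF phi_aspace polyfun_phi])
  have subX: "Z i \<subseteq> x_variety n" for i
    unfolding Z_def x_variety_def by (intro closure_mono) (use phi_xstate in blast)
  have Lsuc: "L j \<subseteq> L (Suc j)" "en j \<in> L (Suc j)" for j unfolding L_def by auto
  have strict: "Z j \<subset> Z (Suc j)" if j: "j < D" for j
  proof (cases "j < K")
    case True
    define m0 where "m0 = h j"
    have m0: "m0 \<in> Mset n" using hM True unfolding m0_def by simp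
    have m0b: "m0 \<in> bits n \<times> bits n" using m0 unfolding Mset_def by auto
    have enj: "en j = Inl m0" using True by (simp add: en_def m0_def)
    define y1 :: "par \<Rightarrow> complex" where "y1 q = (if q = Inl m0 then 1 else 0)" for q
    have y1a: "y1 \<in> aspace (L (Suc j))" unfolding aspace_def y1_def using Lsuc(2)[of j] enj by auto
    have Mof_m0: "Mof n y m0 = y (Inl m0)" for y
      using m0 unfolding Mset_def Mof_def by (cases m0) auto
    show ?thesis unfolding Z_def
    proof (rule strict_step[where g = "\<lambda>\<rho>. \<rho> m0"])
      show "polyfun (bits n \<times> bits n) (\<lambda>\<rho>. \<rho> m0)" by (rule polyfun.pvar[OF m0b])
      show "phi n y m0 = 0" if y: "y \<in> aspace (L j)" for y
      proof -
        have "phi n y = Mof n y" using inr0[OF y] True by (intro phi_noInr) simp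
        moreover have "y (Inl m0) = 0" using later0[OF y, of j] j enj by simp
        ultimately show ?thesis using Mof_m0 by simp
      qed
      show "y1 \<in> aspace (L (Suc j))" by (rule y1a)
      have "phi n y1 = Mof n y1" by (intro phi_noInr) (simp add: y1_def)
      then show "phi n y1 m0 \<noteq> 0" using Mof_m0[of y1] by (simp add: y1_def)
      show "L j \<subseteq> L (Suc j)" by (rule Lsuc(1))
    qed
  next
    case False
    define r where "r = j - K"
    define i0 where "i0 = r div 2"
    have rD: "r < 2 * n" using j False unfolding r_def D_def by simp
    have i0n: "i0 < n" using rD unfolding i0_def by simp
    have enj: "en j = Inr (i0, odd r)" using False by (simp add: en_def r_def i0_def)
    show ?thesis
    proof (cases "odd r")
      case False
      have enj': "en j = Inr (i0, False)" using enj False by simp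
      have "Suc j < D" using rD False \<open>\<not> j < K\<close> unfolding r_def D_def by presburger
      have enS: "en (Suc j) = Inr (i0, True)"
      proof -
        have "Suc j - K = Suc r" using \<open>\<not> j < K\<close> unfolding r_def by simp
        moreover have "Suc r div 2 = i0" using False unfolding i0_def by (simp add: odd_Suc_div_two[symmetric] even_Suc_div_two)
        ultimately show ?thesis using \<open>\<not> j < K\<close> False by (simp add: en_def)
      qed
      define y1 :: "par \<Rightarrow> complex" where "y1 q = (if q = Inr (i0, False) then 1 else 0)" for q
      show ?thesis unfolding Z_def
      proof (rule strict_step[where g = "gfun n i0 E10"])
        show "polyfun (bits n \<times> bits n) (gfun n i0 E10)" by (rule polyfun_gfun)
        show "gfun n i0 E10 (phi n y) = 0" if y: "y \<in> aspace (L j)" for y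
        proof (rule gfun_vanish[OF i0n])
          show "\<And>i a c. i < n \<Longrightarrow> i \<noteq> i0 \<Longrightarrow> a \<noteq> c \<Longrightarrow> Fq y i0 E10 i a c = 0" by (rule Fq_diag_other)
          have "y (Inr (i0, False)) = 0" using later0[OF y, of j] j enj' by simp
          moreover have "y (Inr (i0, True)) = 0" using later0[OF y, of "Suc j"] \<open>Suc j < D\<close> enS by simp
          ultimately show "\<And>a. Fq y i0 E10 i0 a a = 0" by (rule Fq_s_stage)
        qed
        show "y1 \<in> aspace (L (Suc j))" unfolding aspace_def y1_def using Lsuc(2)[of j] enj' by auto
        have "gfun n i0 E10 (phi n y1) = Fq y1 i0 E10 i0 False False"
          by (rule gfun_witness[OF i0n]) (auto simp: y1_def)
        also have "\<dots> = -1" by (rule Fq_s_witness) (simp_all add: y1_def)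
        finally show "gfun n i0 E10 (phi n y1) \<noteq> 0" by simp
        show "L j \<subseteq> L (Suc j)" by (rule Lsuc(1))
      qed
    next
      case True
      have enj': "en j = Inr (i0, True)" using enj True by simp
      define y1 :: "par \<Rightarrow> complex" where "y1 q = (if q = Inr (i0, True) then 1 else 0)" for q
      show ?thesis unfolding Z_def
      proof (rule strict_step[where g = "gfun n i0 E01"])
        show "polyfun (bits n \<times> bits n) (gfun n i0 E01)" by (rule polyfun_gfun)
        show "gfun n i0 E01 (phi n y) = 0" if y: "y \<in> aspace (L j)" for y
        proof (rule gfun_vanish[OF i0n])
          show "\<And>i a c. i < n \<Longrightarrow> i \<noteq> i0 \<Longrightarrow> a \<noteq> c \<Longrightarrow> Fq y i0 E01 i a c = 0" by (rule Fq_diag_other)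
          have "y (Inr (i0, True)) = 0" using later0[OF y, of j] j enj' by simp
          then show "\<And>a. Fq y i0 E01 i0 a a = 0" by (rule Fq_t_stage)
        qed
        show "y1 \<in> aspace (L (Suc j))" unfolding aspace_def y1_def using Lsuc(2)[of j] enj' by auto
        have "gfun n i0 E01 (phi n y1) = Fq y1 i0 E01 i0 False False"
          by (rule gfun_witness[OF i0n]) (auto simp: y1_def)
        also have "\<dots> = 1" by (rule Fq_t_witness) (simp_all add: y1_def)
        finally show "gfun n i0 E01 (phi n y1) \<noteq> 0" by simp
        show "L j \<subseteq> L (Suc j)" by (rule Lsuc(1))
      qed
    qed
  qed
  show ?thesis
    by (rule exI[of _ Z]) (use irr subX strict DP in auto)
qed

theorem corollary4p17:
  fixes n :: nat
  assumes "n \<ge> 1"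
  shows "zariski_dim (bits n \<times> bits n) (x_variety n) = enat (2 ^ (2 * n - 1) + 2 * n - 1)"
proof -
  let ?V = "bits n \<times> bits n"
  let ?D = "card (Pset n)"
  have D: "?D = 2 ^ (2 * n - 1) + 2 * n - 1" by (rule card_Pset[OF assms])
  have Sim: "x_states n \<subseteq> phi n ` aspace (Pset n)" using xstate_in_image by blast
  have Sa: "x_states n \<subseteq> aspace ?V" unfolding x_states_def trace_one_space_def by auto
  have upper: "d \<le> ?D"
    if ch1: "\<forall>i\<le>d. zariski_irreducible ?V (Z i) \<and> Z i \<subseteq> x_variety n" and ch2: "\<forall>i<d. Z i \<subset> Z (Suc i)"
    for d :: nat and Z
  proof (rule ccontr)
    assume "\<not> d \<le> ?D"
    then have dD: "?D < d" by simp
    have "indep ?V (Z d) d" by (rule chain_indep) (use ch1 ch2 in auto)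
    moreover have "Z d \<subseteq> x_variety n" using ch1 by simp
    ultimately have "indep ?V (x_variety n) d" by (rule indep_mono_set[rotated])
    moreover have "\<not> indep ?V (zariski_closure ?V (x_states n)) d"
      by (rule counting[OF finite_Pset Sim Sa polyfun_phi dD])
    ultimately show False unfolding x_variety_def by simp
  qed
  obtain Z0 where Z0: "\<forall>i\<le>?D. zariski_irreducible ?V (Z0 i) \<and> Z0 i \<subseteq> x_variety n"
    "\<forall>i<?D. Z0 i \<subset> Z0 (Suc i)"
    using chain_exists[OF assms] by blast
  let ?S = "{enat d | d. \<exists>Z :: nat \<Rightarrow> ((nat \<Rightarrow> bool) \<times> (nat \<Rightarrow> bool) \<Rightarrow> complex) set.
      (\<forall>i\<le>d. zariski_irreducible ?V (Z i) \<and> Z i \<subseteq> x_variety n) \<and> (\<forall>i<d. Z i \<subset> Z (Suc i))}"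
  have "Sup ?S = enat ?D"
  proof (rule Sup_eqI)
    fix x assume "x \<in> ?S"
    then obtain d Z where "x = enat d" "\<forall>i\<le>d. zariski_irreducible ?V (Z i) \<and> Z i \<subseteq> x_variety n"
      "\<forall>i<d. Z i \<subset> Z (Suc i)" by blast
    then show "x \<le> enat ?D" using upper by simp
  next
    fix y assume h: "\<And>x. x \<in> ?S \<Longrightarrow> x \<le> y"
    have "enat ?D \<in> ?S" using Z0 by blast
    then show "enat ?D \<le> y" by (rule h)
  qed
  then show ?thesis unfolding zariski_dim_def D .
qed

end
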